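(* There exists a constant $\delta_0>0$ such that the following holds. If $\|\mathcal T-\mathcal S\|_{\mathrm{op}}\le \delta_0$, then every local minimizer $x^+$ of $f$ corresponds to a vector of the form $x=x^\natural e^{i\theta}$ for some $\theta\in[0,2\pi)$ (and these points are global minimizers of $f$), and every saddle point of $f$ is strict, i.e. at every critical point of $f$ that is not a local minimizer the Hessian of $f$ has a strictly negative eigenvalue.
   Context: Let $n,m\ge 1$, $a_1,\dots,a_m\in\mathbb C^n$ and $x^\natural\in\mathbb C^n$. For $a,b\in\mathbb C^n$ write $\langle a,b\rangle=\sum_{j}a_j\overline{b_j}$ and let $\|\cdot\|$ be the Euclidean norm. Let $y_i=|\langle a_i,x^\natural\rangle|^2$. For $v\in\mathbb C^n$ put $v^+=(\mathrm{Re}\,v,\mathrm{Im}\,v)\in\mathbb R^{2n}$ and $v^-=Mv^+=(-\mathrm{Im}\,v,\mathrm{Re}\,v)$, where $M=\begin{bmatrix}0&-I_n\\ I_n&0\end{bmatrix}$. The map $x\mapsto x^+$ identifies $\mathbb C^n$ with $\mathbb R^{2n}$, and $x$ and $x^+$ always correspond to each other. Define $f:\mathbb R^{2n}\to\mathbb R$ by $f(x^+)=\sum_{i=1}^m\big(|\langle a_i,x\rangle|^2-y_i\big)^2=\sum_{i=1}^m\big(\langle A_ix^+,x^+\rangle-y_i\big)^2$ with $A_i=a_i^+(a_i^+)^{T}+a_i^-(a_i^-)^{T}$; gradients and Hessians are taken with respect to $x^+\in\mathbb R^{2n}$. Fix $\sigma>0$ (in the paper, $\sigma^2=\mathrm{Var}((a_i^+)_1)$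 for random measurement vectors) and set $c=m\sigma^4$. Define the order-4 tensors on $\mathbb R^{2n}$: $\mathcal T=\frac1c\sum_{i=1}^m(a_i^+)^{\otimes 4}$ and $\mathcal S_{i_1i_2i_3i_4}=\mathbf 1_{i_1=i_2,\,i_3=i_4}+\mathbf 1_{i_1=i_3,\,i_2=i_4}+\mathbf 1_{i_1=i_4,\,i_2=i_3}$ for $1\le i_1,i_2,i_3,i_4\le 2n$. The inner product of tensors is the sum of entrywise products, and $\|\mathcal R\|_{\mathrm{op}}=\sup\{\langle \mathcal R,u_1\otimes u_2\otimes u_3\otimes u_4\rangle:\ u_j\in\mathbb R^{2n},\ \|u_1\|\|u_2\|\|u_3\|\|u_4\|=1\}$. *)

theory Defs
  imports "HOL-Analysis.Analysis"
begin

text \<open>Vectors in C^n are modelled as functions nat => complex (only indices j < n matter);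
vectors in R^N (N = 2n) as functions nat => real vanishing at indices >= N.
This explicit-carrier encoding lets the constant delta_0 be independent of n and m.\<close>

definition rvecs :: "nat \<Rightarrow> (nat \<Rightarrow> real) set" where
  "rvecs N = {u. \<forall>j\<ge>N. u j = 0}"

definition rnorm :: "nat \<Rightarrow> (nat \<Rightarrow> real) \<Rightarrow> real" where
  "rnorm N u = sqrt (\<Sum>j<N. (u j)\<^sup>2)"

definition cinner :: "nat \<Rightarrow> (nat \<Rightarrow> complex) \<Rightarrow> (nat \<Rightarrow> complex) \<Rightarrow> complex" where
  "cinner n a b = (\<Sum>j<n. a j * cnj (b j))"

definition plus_vec :: "nat \<Rightarrow> (nat \<Rightarrow> complex) \<Rightarrow> nat \<Rightarrow> real" where
  "plus_vec n v = (\<lambda>j. if j < n then Re (v j) else if j < 2*n then Im (v (j - n)) else 0)"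

definition of_plus :: "nat \<Rightarrow> (nat \<Rightarrow> real) \<Rightarrow> nat \<Rightarrow> complex" where
  "of_plus n u = (\<lambda>j. if j < n then Complex (u j) (u (j + n)) else 0)"

definition pr_obj :: "nat \<Rightarrow> nat \<Rightarrow> (nat \<Rightarrow> nat \<Rightarrow> complex) \<Rightarrow> (nat \<Rightarrow> complex) \<Rightarrow> (nat \<Rightarrow> real) \<Rightarrow> real" where
  "pr_obj n m a xn u =
     (\<Sum>i<m. ((cmod (cinner n (a i) (of_plus n u)))\<^sup>2 - (cmod (cinner n (a i) xn))\<^sup>2)\<^sup>2)"

definition is_local_min :: "nat \<Rightarrow> ((nat \<Rightarrow> real) \<Rightarrow> real) \<Rightarrow> (nat \<Rightarrow> real) \<Rightarrow> bool" where
  "is_local_min N F u \<longleftrightarrow> u \<in> rvecs N \<and>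
     (\<exists>\<epsilon>>0. \<forall>v\<in>rvecs N. rnorm N (\<lambda>j. v j - u j) < \<epsilon> \<longrightarrow> F u \<le> F v)"

definition is_global_min :: "nat \<Rightarrow> ((nat \<Rightarrow> real) \<Rightarrow> real) \<Rightarrow> (nat \<Rightarrow> real) \<Rightarrow> bool" where
  "is_global_min N F u \<longleftrightarrow> u \<in> rvecs N \<and> (\<forall>v\<in>rvecs N. F u \<le> F v)"

definition pderiv_r :: "((nat \<Rightarrow> real) \<Rightarrow> real) \<Rightarrow> nat \<Rightarrow> (nat \<Rightarrow> real) \<Rightarrow> real" where
  "pderiv_r F j u = deriv (\<lambda>t. F (\<lambda>l. u l + (if l = j then t else 0))) 0"

definition hess_r :: "((nat \<Rightarrow> real) \<Rightarrow> real) \<Rightarrow> (nat \<Rightarrow> real) \<Rightarrow> nat \<Rightarrow> nat \<Rightarrow> real" where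
  "hess_r F u j k = deriv (\<lambda>t. pderiv_r F j (\<lambda>l. u l + (if l = k then t else 0))) 0"

definition is_critical :: "nat \<Rightarrow> ((nat \<Rightarrow> real) \<Rightarrow> real) \<Rightarrow> (nat \<Rightarrow> real) \<Rightarrow> bool" where
  "is_critical N F u \<longleftrightarrow> u \<in> rvecs N \<and> (\<forall>j<N. pderiv_r F j u = 0)"

definition hess_has_neg_eigenvalue :: "nat \<Rightarrow> ((nat \<Rightarrow> real) \<Rightarrow> real) \<Rightarrow> (nat \<Rightarrow> real) \<Rightarrow> bool" where
  "hess_has_neg_eigenvalue N F u \<longleftrightarrow>
     (\<exists>\<mu><0. \<exists>v\<in>rvecs N. v \<noteq> (\<lambda>_. 0) \<and>
        (\<forall>j<N. (\<Sum>k<N. hess_r F u j k * v k) = \<mu> * v j))"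

type_synonym tensor4 = "nat \<Rightarrow> nat \<Rightarrow> nat \<Rightarrow> nat \<Rightarrow> real"

definition T_tensor :: "nat \<Rightarrow> nat \<Rightarrow> real \<Rightarrow> (nat \<Rightarrow> nat \<Rightarrow> complex) \<Rightarrow> tensor4" where
  "T_tensor n m \<sigma> a = (\<lambda>i1 i2 i3 i4. (1 / (real m * \<sigma> ^ 4)) *
     (\<Sum>i<m. plus_vec n (a i) i1 * plus_vec n (a i) i2 * plus_vec n (a i) i3 * plus_vec n (a i) i4))"

definition S_tensor :: tensor4 where
  "S_tensor = (\<lambda>i1 i2 i3 i4.
     (if i1 = i2 \<and> i3 = i4 then 1 else 0) + (if i1 = i3 \<and> i2 = i4 then 1 else 0)
     + (if i1 = i4 \<and> i2 = i3 then 1 else 0))"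

definition tensor_pair :: "nat \<Rightarrow> tensor4 \<Rightarrow> (nat \<Rightarrow> real) \<Rightarrow> (nat \<Rightarrow> real) \<Rightarrow> (nat \<Rightarrow> real) \<Rightarrow> (nat \<Rightarrow> real) \<Rightarrow> real" where
  "tensor_pair N R u1 u2 u3 u4 =
     (\<Sum>i1<N. \<Sum>i2<N. \<Sum>i3<N. \<Sum>i4<N. R i1 i2 i3 i4 * u1 i1 * u2 i2 * u3 i3 * u4 i4)"

definition tensor_opnorm :: "nat \<Rightarrow> tensor4 \<Rightarrow> real" where
  "tensor_opnorm N R = Sup {tensor_pair N R u1 u2 u3 u4 | u1 u2 u3 u4.
      u1 \<in> rvecs N \<and> u2 \<in> rvecs N \<and> u3 \<in> rvecs N \<and> u4 \<in> rvecs N \<and>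
      rnorm N u1 * rnorm N u2 * rnorm N u3 * rnorm N u4 = 1}"

end

theory Submission
  imports Defs
begin


definition dotp :: "nat \<Rightarrow> (nat \<Rightarrow> real) \<Rightarrow> (nat \<Rightarrow> real) \<Rightarrow> real" where
  "dotp N u v = (\<Sum>j<N. u j * v j)"

definition Mop :: "nat \<Rightarrow> (nat \<Rightarrow> real) \<Rightarrow> nat \<Rightarrow> real" where
  "Mop n u = (\<lambda>j. if j < n then - u (j+n) else if j < 2*n then u (j-n) else 0)"

lemma sum_2n: "(\<Sum>j<2*(n::nat). F j) = (\<Sum>j<n. F j) + (\<Sum>j<n. F (j+n))"
proof -
  have "(\<Sum>j<2*n. F j) = sum F ({..<n} \<union> {n..<n+n})" by (intro sum.cong) auto
  also have "\<dots> = (\<Sum>j<n. F j) + (\<Sum>j\<in>{n..<n+n}. F j)"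
    by (rule sum.union_disjoint) auto
  also have "(\<Sum>j\<in>{n..<n+n}. F j) = (\<Sum>j\<in>{0..<n}. F (j+n))"
    using sum.shift_bounds_nat_ivl[of F 0 n n] by simp
  finally show ?thesis by (simp add: lessThan_atLeast0)
qed

lemma Mop_lo: "j < n \<Longrightarrow> Mop n u j = - u (j+n)" by (simp add: Mop_def)
lemma Mop_hi: "Mop n u (j+n) = (if j < n then u j else 0)" by (simp add: Mop_def)

lemma dot_MM: "dotp (2*n) (Mop n u) (Mop n v) = dotp (2*n) u v"
  unfolding dotp_def sum_2n by (simp add: Mop_lo Mop_hi add.commute)

lemma dot_M_swap: "dotp (2*n) u (Mop n v) = - dotp (2*n) (Mop n u) v"
  unfolding dotp_def sum_2n by (simp add: Mop_lo Mop_hi sum_negf[symmetric] sum.distrib[symmetric] algebra_simps)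

lemma dot_M_self: "dotp (2*n) u (Mop n u) = 0"
  unfolding dotp_def sum_2n by (simp add: Mop_lo Mop_hi sum_negf[symmetric] sum.distrib[symmetric] algebra_simps)

lemma dot_comm: "dotp N u v = dotp N v u" unfolding dotp_def by (simp add: mult.commute)

lemma Mop_rvecs: "Mop n u \<in> rvecs (2*n)" by (simp add: Mop_def rvecs_def)

lemma Mop_lin: "Mop n (\<lambda>j. x * u j + y * v j) = (\<lambda>j. x * Mop n u j + y * Mop n v j)"
  by (auto simp: Mop_def fun_eq_iff)

lemma Mop_MM: "u \<in> rvecs (2*n) \<Longrightarrow> Mop n (Mop n u) = (\<lambda>j. - u j)"
  by (auto simp: Mop_def fun_eq_iff rvecs_def)

lemma dot_lin: "dotp N w (\<lambda>j. x * u j + y * v j) = x * dotp N w u + y * dotp N w v"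
  unfolding dotp_def by (simp add: sum.distrib sum_distrib_left algebra_simps)

lemma rnorm_dot: "rnorm N u = sqrt (dotp N u u)"
  unfolding rnorm_def dotp_def by (simp add: power2_eq_square)

lemma cinner_plus: "cinner n b (of_plus n u) = Complex (dotp (2*n) (plus_vec n b) u) (dotp (2*n) (plus_vec n b) (Mop n u))"
proof -
  have "cinner n b (of_plus n u) = (\<Sum>j<n. Complex (Re (b j) * u j + Im (b j) * u (j+n)) (Im (b j) * u j - Re (b j) * u (j+n)))"
    unfolding cinner_def of_plus_def by (intro sum.cong) (auto simp: complex_eq_iff)
  also have "\<dots> = Complex (\<Sum>j<n. Re (b j) * u j + Im (b j) * u (j+n)) (\<Sum>j<n. Im (b j) * u j - Re (b j) * u (j+n))"
    by (simp add: complex_eq_iff Re_sum Im_sum)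
  finally show ?thesis unfolding dotp_def sum_2n
    by (simp add: plus_vec_def Mop_lo Mop_hi sum.distrib sum_subtractf sum_negf algebra_simps)
qed

lemma of_plus_plus: "j < n \<Longrightarrow> of_plus n (plus_vec n x) j = x j"
  by (simp add: of_plus_def plus_vec_def complex_eq_iff)

lemma cinner_xn: "cinner n b x = cinner n b (of_plus n (plus_vec n x))"
  unfolding cinner_def by (intro sum.cong) (auto simp: of_plus_plus)

lemma cmod_sq: "(cmod (Complex x y))\<^sup>2 = x\<^sup>2 + y\<^sup>2"
  by (simp add: cmod_def)


definition Lf :: "nat \<Rightarrow> (nat \<Rightarrow> complex) \<Rightarrow> (nat \<Rightarrow> real) \<Rightarrow> real" where
  "Lf n b v = dotp (2*n) (plus_vec n b) v"
definition Qf :: "nat \<Rightarrow> (nat \<Rightarrow> complex) \<Rightarrow> (nat \<Rightarrow> real) \<Rightarrow> real" where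
  "Qf n b v = (Lf n b v)\<^sup>2 + (Lf n b (Mop n v))\<^sup>2"
definition Bf :: "nat \<Rightarrow> (nat \<Rightarrow> complex) \<Rightarrow> (nat \<Rightarrow> real) \<Rightarrow> (nat \<Rightarrow> real) \<Rightarrow> real" where
  "Bf n b v w = Lf n b v * Lf n b w + Lf n b (Mop n v) * Lf n b (Mop n w)"

lemma cmod_cinner_sq: "(cmod (cinner n b (of_plus n u)))\<^sup>2 = Qf n b u"
  by (simp add: cinner_plus cmod_sq Qf_def Lf_def)

lemma pr_obj_eq: "pr_obj n m a xn u = (\<Sum>i<m. (Qf n (a i) u - Qf n (a i) (plus_vec n xn))\<^sup>2)"
  unfolding pr_obj_def by (simp add: cmod_cinner_sq cinner_xn[of n _ xn])

lemma tp_add: "tensor_pair N (\<lambda>i1 i2 i3 i4. X i1 i2 i3 i4 + Y i1 i2 i3 i4) u1 u2 u3 u4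
   = tensor_pair N X u1 u2 u3 u4 + tensor_pair N Y u1 u2 u3 u4"
  unfolding tensor_pair_def by (simp add: sum.distrib distrib_right)

lemma tp_diff: "tensor_pair N (\<lambda>i1 i2 i3 i4. X i1 i2 i3 i4 - Y i1 i2 i3 i4) u1 u2 u3 u4
   = tensor_pair N X u1 u2 u3 u4 - tensor_pair N Y u1 u2 u3 u4"
  unfolding tensor_pair_def by (simp add: sum_subtractf left_diff_distrib)

lemma tp_scale: "tensor_pair N (\<lambda>i1 i2 i3 i4. c * X i1 i2 i3 i4) u1 u2 u3 u4
   = c * tensor_pair N X u1 u2 u3 u4"
  unfolding tensor_pair_def by (simp add: sum_distrib_left mult.assoc)

lemma tp_zero: "tensor_pair N (\<lambda>i1 i2 i3 i4. 0) u1 u2 u3 u4 = 0"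
  unfolding tensor_pair_def by simp

lemma tp_sum: "finite I \<Longrightarrow> tensor_pair N (\<lambda>i1 i2 i3 i4. \<Sum>i\<in>I. R i i1 i2 i3 i4) u1 u2 u3 u4
   = (\<Sum>i\<in>I. tensor_pair N (R i) u1 u2 u3 u4)"
proof (induction I rule: finite_induct)
  case empty then show ?case by (simp add: tp_zero)
next
  case (insert x F)
  then show ?case by (simp add: tp_add)
qed

lemma sum_prod4: "(\<Sum>i1<N. \<Sum>i2<N. \<Sum>i3<N. \<Sum>i4<N. a i1 * b i2 * c i3 * (d i4::real)) = (\<Sum>i<N. a i) * (\<Sum>i<N. b i) * (\<Sum>i<N. c i) * (\<Sum>i<N. d i)"
proof -
  have "(\<Sum>i1<N. \<Sum>i2<N. \<Sum>i3<N. \<Sum>i4<N. a i1 * b i2 * c i3 * (d i4::real)) = (\<Sum>i1<N. a i1 * (\<Sum>i2<N. b i2 * (\<Sum>i3<N. c i3 * (\<Sum>i4<N. d i4))))"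
    by (simp add: sum_distrib_left mult.assoc)
  also have "\<dots> = (\<Sum>i<N. a i) * ((\<Sum>i<N. b i) * ((\<Sum>i<N. c i) * (\<Sum>i<N. d i)))"
    by (simp add: sum_distrib_right)
  finally show ?thesis by (simp add: mult.assoc)
qed
lemma sif: "(\<Sum>k\<in>S. if A then f k else 0) = (if A then (\<Sum>k\<in>S. f k) else (0::real))" by simp
lemma ifand: "(if A \<and> B then x else (0::real)) = (if A then if B then x else 0 else 0)" by simp
lemma d1: "(\<Sum>i1<(N::nat). \<Sum>i2<N. \<Sum>i3<N. \<Sum>i4<N. if i1 = i2 \<and> i3 = i4 then F i1 i2 i3 i4 else 0) = (\<Sum>i1<N. \<Sum>i3<N. (F i1 i1 i3 i3::real))"
  by (simp only: ifand sif) (simp add: sum.delta)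
lemma d2: "(\<Sum>i1<(N::nat). \<Sum>i2<N. \<Sum>i3<N. \<Sum>i4<N. if i1 = i3 \<and> i2 = i4 then F i1 i2 i3 i4 else 0) = (\<Sum>i1<N. \<Sum>i2<N. (F i1 i2 i1 i2::real))"
  by (simp only: ifand sif) (simp add: sum.delta)
lemma d3: "(\<Sum>i1<(N::nat). \<Sum>i2<N. \<Sum>i3<N. \<Sum>i4<N. if i1 = i4 \<and> i2 = i3 then F i1 i2 i3 i4 else 0) = (\<Sum>i1<N. \<Sum>i2<N. (F i1 i2 i2 i1::real))"
  by (simp only: ifand sif) (simp add: sum.delta)

lemma tp_rank1: "tensor_pair N (\<lambda>i1 i2 i3 i4. g i1 * g i2 * g i3 * g i4) u1 u2 u3 u4
   = dotp N g u1 * dotp N g u2 * dotp N g u3 * dotp N g u4"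
  unfolding tensor_pair_def dotp_def sum_prod4[symmetric]
  by (simp add: ac_simps)

definition cT :: "nat \<Rightarrow> real \<Rightarrow> real" where "cT m \<sigma> = real m * \<sigma> ^ 4"

lemma tp_T: "tensor_pair (2*n) (T_tensor n m \<sigma> a) u1 u2 u3 u4
   = (1 / cT m \<sigma>) * (\<Sum>i<m. Lf n (a i) u1 * Lf n (a i) u2 * Lf n (a i) u3 * Lf n (a i) u4)"
  unfolding T_tensor_def cT_def tp_scale tp_sum[OF finite_lessThan] tp_rank1 Lf_def ..

lemma tp_S: "tensor_pair N S_tensor u1 u2 u3 u4
   = dotp N u1 u2 * dotp N u3 u4 + dotp N u1 u3 * dotp N u2 u4 + dotp N u1 u4 * dotp N u2 u3"
proof -
  have e: "S_tensor = (\<lambda>i1 i2 i3 i4. (if i1 = i2 \<and> i3 = i4 then 1 else 0) + ((if i1 = i3 \<and> i2 = i4 then 1 else 0)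
     + (if i1 = i4 \<and> i2 = i3 then 1 else 0)))" unfolding S_tensor_def by (simp add: fun_eq_iff)
  have 1: "tensor_pair N (\<lambda>i1 i2 i3 i4. (if i1 = i2 \<and> i3 = i4 then 1 else 0)) u1 u2 u3 u4 = dotp N u1 u2 * dotp N u3 u4"
  proof -
    have "tensor_pair N (\<lambda>i1 i2 i3 i4. (if i1 = i2 \<and> i3 = i4 then 1 else 0)) u1 u2 u3 u4 = (\<Sum>i1<N. \<Sum>i2<N. \<Sum>i3<N. \<Sum>i4<N. if i1 = i2 \<and> i3 = i4 then u1 i1 * u2 i2 * u3 i3 * u4 i4 else 0)"
      unfolding tensor_pair_def by (intro sum.cong refl) simp
    also have "\<dots> = (\<Sum>i1<N. \<Sum>i3<N. u1 i1 * u2 i1 * (u3 i3 * u4 i3))" by (simp add: d1 ac_simps)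
    also have "\<dots> = dotp N u1 u2 * dotp N u3 u4" unfolding dotp_def sum_product ..
    finally show ?thesis .
  qed
  have 2: "tensor_pair N (\<lambda>i1 i2 i3 i4. (if i1 = i3 \<and> i2 = i4 then 1 else 0)) u1 u2 u3 u4 = dotp N u1 u3 * dotp N u2 u4"
  proof -
    have "tensor_pair N (\<lambda>i1 i2 i3 i4. (if i1 = i3 \<and> i2 = i4 then 1 else 0)) u1 u2 u3 u4 = (\<Sum>i1<N. \<Sum>i2<N. \<Sum>i3<N. \<Sum>i4<N. if i1 = i3 \<and> i2 = i4 then u1 i1 * u2 i2 * u3 i3 * u4 i4 else 0)"
      unfolding tensor_pair_def by (intro sum.cong refl) simp
    also have "\<dots> = (\<Sum>i1<N. \<Sum>i2<N. u1 i1 * u3 i1 * (u2 i2 * u4 i2))" by (simp add: d2 ac_simps)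
    also have "\<dots> = dotp N u1 u3 * dotp N u2 u4" unfolding dotp_def sum_product ..
    finally show ?thesis .
  qed
  have 3: "tensor_pair N (\<lambda>i1 i2 i3 i4. (if i1 = i4 \<and> i2 = i3 then 1 else 0)) u1 u2 u3 u4 = dotp N u1 u4 * dotp N u2 u3"
  proof -
    have "tensor_pair N (\<lambda>i1 i2 i3 i4. (if i1 = i4 \<and> i2 = i3 then 1 else 0)) u1 u2 u3 u4 = (\<Sum>i1<N. \<Sum>i2<N. \<Sum>i3<N. \<Sum>i4<N. if i1 = i4 \<and> i2 = i3 then u1 i1 * u2 i2 * u3 i3 * u4 i4 else 0)"
      unfolding tensor_pair_def by (intro sum.cong refl) simp
    also have "\<dots> = (\<Sum>i1<N. \<Sum>i2<N. u1 i1 * u4 i1 * (u2 i2 * u3 i2))" by (simp add: d3 ac_simps)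
    also have "\<dots> = dotp N u1 u4 * dotp N u2 u3" unfolding dotp_def sum_product ..
    finally show ?thesis .
  qed
  show ?thesis unfolding e tp_add 1 2 3 by simp
qed


lemma rnorm_nonneg: "rnorm N u \<ge> 0" unfolding rnorm_def by (simp add: sum_nonneg)

lemma rnorm_scale: "rnorm N (\<lambda>j. c * u j) = \<bar>c\<bar> * rnorm N u"
  unfolding rnorm_def by (simp add: power_mult_distrib sum_distrib_left[symmetric] real_sqrt_mult)

lemma comp_le_rnorm: "i < N \<Longrightarrow> \<bar>u i\<bar> \<le> rnorm N u"
proof -
  assume i: "i < N"
  have "(u i)\<^sup>2 \<le> (\<Sum>j<N. (u j)\<^sup>2)"
    using i by (intro member_le_sum) auto
  hence "sqrt ((u i)\<^sup>2) \<le> rnorm N u" unfolding rnorm_def by (rule real_sqrt_le_mono)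
  thus ?thesis by simp
qed

lemma rnorm_zero: "rnorm N u = 0 \<Longrightarrow> i < N \<Longrightarrow> u i = 0"
  using comp_le_rnorm[of i N u] by simp

lemma tp_bound_crude: "\<bar>tensor_pair N R u1 u2 u3 u4\<bar> \<le>
   (\<Sum>i1<N. \<Sum>i2<N. \<Sum>i3<N. \<Sum>i4<N. \<bar>R i1 i2 i3 i4\<bar>) * (rnorm N u1 * rnorm N u2 * rnorm N u3 * rnorm N u4)"
proof -
  let ?P = "rnorm N u1 * rnorm N u2 * rnorm N u3 * rnorm N u4"
  have "\<bar>tensor_pair N R u1 u2 u3 u4\<bar> \<le> (\<Sum>i1<N. \<Sum>i2<N. \<Sum>i3<N. \<Sum>i4<N. \<bar>R i1 i2 i3 i4 * u1 i1 * u2 i2 * u3 i3 * u4 i4\<bar>)"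
    unfolding tensor_pair_def
    by (rule order.trans[OF sum_abs] sum_mono)+ simp
  also have "\<dots> \<le> (\<Sum>i1<N. \<Sum>i2<N. \<Sum>i3<N. \<Sum>i4<N. \<bar>R i1 i2 i3 i4\<bar> * ?P)"
  proof (intro sum_mono)
    fix i1 i2 i3 i4 assume "i1 \<in> {..<N}" "i2 \<in> {..<N}" "i3 \<in> {..<N}" "i4 \<in> {..<N}"
    hence b: "\<bar>u1 i1\<bar> \<le> rnorm N u1" "\<bar>u2 i2\<bar> \<le> rnorm N u2" "\<bar>u3 i3\<bar> \<le> rnorm N u3" "\<bar>u4 i4\<bar> \<le> rnorm N u4"
      by (auto intro: comp_le_rnorm)
    have "\<bar>u1 i1\<bar> * \<bar>u2 i2\<bar> * \<bar>u3 i3\<bar> * \<bar>u4 i4\<bar> \<le> ?P"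
      by (intro mult_mono b) (auto simp: rnorm_nonneg)
    hence "\<bar>R i1 i2 i3 i4\<bar> * (\<bar>u1 i1\<bar> * \<bar>u2 i2\<bar> * \<bar>u3 i3\<bar> * \<bar>u4 i4\<bar>) \<le> \<bar>R i1 i2 i3 i4\<bar> * ?P"
      by (rule mult_left_mono) simp
    thus "\<bar>R i1 i2 i3 i4 * u1 i1 * u2 i2 * u3 i3 * u4 i4\<bar> \<le> \<bar>R i1 i2 i3 i4\<bar> * ?P"
      by (simp add: abs_mult mult.assoc)
  qed
  also have "\<dots> = (\<Sum>i1<N. \<Sum>i2<N. \<Sum>i3<N. \<Sum>i4<N. \<bar>R i1 i2 i3 i4\<bar>) * ?P"
    by (simp add: sum_distrib_right)
  finally show ?thesis .
qed

lemma tp_scale_args: "tensor_pair N R (\<lambda>j. c1 * u1 j) (\<lambda>j. c2 * u2 j) (\<lambda>j. c3 * u3 j) (\<lambda>j. c4 * u4 j)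
   = c1 * c2 * c3 * c4 * tensor_pair N R u1 u2 u3 u4"
  unfolding tensor_pair_def by (simp add: sum_distrib_left ac_simps)

lemma tp_zero_arg:
  assumes "rnorm N u1 = 0 \<or> rnorm N u2 = 0 \<or> rnorm N u3 = 0 \<or> rnorm N u4 = 0"
  shows "tensor_pair N R u1 u2 u3 u4 = 0"
  unfolding tensor_pair_def using assms
  by (auto intro!: sum.neutral dest: rnorm_zero)

lemma rvecs_scale: "u \<in> rvecs N \<Longrightarrow> (\<lambda>j. c * u j) \<in> rvecs N" by (simp add: rvecs_def)

lemma opnorm_bound:
  assumes op: "tensor_opnorm N R \<le> \<delta>"
    and r: "u1 \<in> rvecs N" "u2 \<in> rvecs N" "u3 \<in> rvecs N" "u4 \<in> rvecs N"
  shows "\<bar>tensor_pair N R u1 u2 u3 u4\<bar> \<le> \<delta> * (rnorm N u1 * rnorm N u2 * rnorm N u3 * rnorm N u4)"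
proof (cases "rnorm N u1 = 0 \<or> rnorm N u2 = 0 \<or> rnorm N u3 = 0 \<or> rnorm N u4 = 0")
  case True
  hence "tensor_pair N R u1 u2 u3 u4 = 0" by (rule tp_zero_arg)
  moreover have "\<delta> * (rnorm N u1 * rnorm N u2 * rnorm N u3 * rnorm N u4) = 0" using True by auto
  ultimately show ?thesis by (simp only:)
next
  case False
  let ?A = "{tensor_pair N R u1 u2 u3 u4 | u1 u2 u3 u4.
      u1 \<in> rvecs N \<and> u2 \<in> rvecs N \<and> u3 \<in> rvecs N \<and> u4 \<in> rvecs N \<and>
      rnorm N u1 * rnorm N u2 * rnorm N u3 * rnorm N u4 = 1}"
  define K where "K = (\<Sum>i1<N. \<Sum>i2<N. \<Sum>i3<N. \<Sum>i4<N. \<bar>R i1 i2 i3 i4\<bar>)"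
  have bdd: "bdd_above ?A"
  proof (rule bdd_aboveI)
    fix x assume "x \<in> ?A"
    then obtain w1 w2 w3 w4 where x: "x = tensor_pair N R w1 w2 w3 w4" and
      w: "rnorm N w1 * rnorm N w2 * rnorm N w3 * rnorm N w4 = 1" by blast
    show "x \<le> K" using tp_bound_crude[of N R w1 w2 w3 w4] unfolding x w K_def by simp
  qed
  define r1 where "r1 = rnorm N u1"
  define r2 where "r2 = rnorm N u2"
  define r3 where "r3 = rnorm N u3"
  define r4 where "r4 = rnorm N u4"
  have pos: "r1 > 0" "r2 > 0" "r3 > 0" "r4 > 0" using False rnorm_nonneg
    unfolding r1_def r2_def r3_def r4_def by (metis less_eq_real_def)+
  define w1 where "w1 = (\<lambda>j. (1/r1) * u1 j)"
  define w2 where "w2 = (\<lambda>j. (1/r2) * u2 j)"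
  define w3 where "w3 = (\<lambda>j. (1/r3) * u3 j)"
  define w4 where "w4 = (\<lambda>j. (1/r4) * u4 j)"
  have nw: "rnorm N w1 = 1" "rnorm N w2 = 1" "rnorm N w3 = 1" "rnorm N w4 = 1"
    using pos unfolding w1_def w2_def w3_def w4_def rnorm_scale r1_def r2_def r3_def r4_def by auto
  have nmw: "rnorm N (\<lambda>j. (-1) * w1 j) = 1" using nw rnorm_scale[of N "-1" w1] by simp
  have rw: "w1 \<in> rvecs N" "w2 \<in> rvecs N" "w3 \<in> rvecs N" "w4 \<in> rvecs N" "(\<lambda>j. (-1) * w1 j) \<in> rvecs N"
    using r unfolding w1_def w2_def w3_def w4_def by (auto simp: rvecs_def)
  have "tensor_pair N R w1 w2 w3 w4 \<in> ?A" using nw rw by fastforce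
  hence a1: "tensor_pair N R w1 w2 w3 w4 \<le> \<delta>"
    using cSup_upper[OF _ bdd] op unfolding tensor_opnorm_def by force
  have "tensor_pair N R (\<lambda>j. (-1) * w1 j) (\<lambda>j. 1 * w2 j) (\<lambda>j. 1 * w3 j) (\<lambda>j. 1 * w4 j) \<in> ?A"
    using nw nmw rw by fastforce
  hence "tensor_pair N R (\<lambda>j. (-1) * w1 j) (\<lambda>j. 1 * w2 j) (\<lambda>j. 1 * w3 j) (\<lambda>j. 1 * w4 j) \<le> \<delta>"
    using cSup_upper[OF _ bdd] op unfolding tensor_opnorm_def by force
  hence a2: "- tensor_pair N R w1 w2 w3 w4 \<le> \<delta>" unfolding tp_scale_args by simp
  have eq: "tensor_pair N R u1 u2 u3 u4 = (r1*r2*r3*r4) * tensor_pair N R w1 w2 w3 w4"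
    unfolding w1_def w2_def w3_def w4_def tp_scale_args using pos by simp
  have "\<bar>tensor_pair N R w1 w2 w3 w4\<bar> \<le> \<delta>" using a1 a2 by simp
  hence "(r1*r2*r3*r4) * \<bar>tensor_pair N R w1 w2 w3 w4\<bar> \<le> (r1*r2*r3*r4) * \<delta>"
    using pos by (intro mult_left_mono) auto
  thus ?thesis unfolding eq r1_def r2_def r3_def r4_def using pos
    by (simp add: abs_mult r1_def r2_def r3_def r4_def ac_simps)
qed


definition Hyp :: "nat \<Rightarrow> nat \<Rightarrow> (nat \<Rightarrow> nat \<Rightarrow> complex) \<Rightarrow> real \<Rightarrow> real \<Rightarrow> bool" where
  "Hyp n m a \<sigma> \<delta> \<longleftrightarrow> (\<forall>u1 u2 u3 u4. u1 \<in> rvecs (2*n) \<longrightarrow> u2 \<in> rvecs (2*n) \<longrightarrow> u3 \<in> rvecs (2*n) \<longrightarrow> u4 \<in> rvecs (2*n) \<longrightarrow>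
     \<bar>tensor_pair (2*n) (T_tensor n m \<sigma> a) u1 u2 u3 u4 -
       (dotp (2*n) u1 u2 * dotp (2*n) u3 u4 + dotp (2*n) u1 u3 * dotp (2*n) u2 u4 + dotp (2*n) u1 u4 * dotp (2*n) u2 u3)\<bar>
     \<le> \<delta> * (rnorm (2*n) u1 * rnorm (2*n) u2 * rnorm (2*n) u3 * rnorm (2*n) u4))"

lemma Hyp_from_opnorm:
  assumes "tensor_opnorm (2*n) (\<lambda>i1 i2 i3 i4. T_tensor n m \<sigma> a i1 i2 i3 i4 - S_tensor i1 i2 i3 i4) \<le> \<delta>"
  shows "Hyp n m a \<sigma> \<delta>"
  unfolding Hyp_def
proof (intro allI impI)
  fix u1 u2 u3 u4 assume r: "u1 \<in> rvecs (2*n)" "u2 \<in> rvecs (2*n)" "u3 \<in> rvecs (2*n)" "u4 \<in> rvecs (2*n)"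
  from opnorm_bound[OF assms r] show "\<bar>tensor_pair (2*n) (T_tensor n m \<sigma> a) u1 u2 u3 u4 -
       (dotp (2*n) u1 u2 * dotp (2*n) u3 u4 + dotp (2*n) u1 u3 * dotp (2*n) u2 u4 + dotp (2*n) u1 u4 * dotp (2*n) u2 u3)\<bar>
     \<le> \<delta> * (rnorm (2*n) u1 * rnorm (2*n) u2 * rnorm (2*n) u3 * rnorm (2*n) u4)"
    unfolding tp_diff tp_S .
qed

lemma HypD:
  assumes "Hyp n m a \<sigma> \<delta>" "u1 \<in> rvecs (2*n)" "u2 \<in> rvecs (2*n)" "u3 \<in> rvecs (2*n)" "u4 \<in> rvecs (2*n)"
  shows "tensor_pair (2*n) (T_tensor n m \<sigma> a) u1 u2 u3 u4 \<le>
       (dotp (2*n) u1 u2 * dotp (2*n) u3 u4 + dotp (2*n) u1 u3 * dotp (2*n) u2 u4 + dotp (2*n) u1 u4 * dotp (2*n) u2 u3)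
     + \<delta> * (rnorm (2*n) u1 * rnorm (2*n) u2 * rnorm (2*n) u3 * rnorm (2*n) u4)"
   "tensor_pair (2*n) (T_tensor n m \<sigma> a) u1 u2 u3 u4 \<ge>
       (dotp (2*n) u1 u2 * dotp (2*n) u3 u4 + dotp (2*n) u1 u3 * dotp (2*n) u2 u4 + dotp (2*n) u1 u4 * dotp (2*n) u2 u3)
     - \<delta> * (rnorm (2*n) u1 * rnorm (2*n) u2 * rnorm (2*n) u3 * rnorm (2*n) u4)"
proof -
  have "\<bar>tensor_pair (2*n) (T_tensor n m \<sigma> a) u1 u2 u3 u4 -
       (dotp (2*n) u1 u2 * dotp (2*n) u3 u4 + dotp (2*n) u1 u3 * dotp (2*n) u2 u4 + dotp (2*n) u1 u4 * dotp (2*n) u2 u3)\<bar>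
     \<le> \<delta> * (rnorm (2*n) u1 * rnorm (2*n) u2 * rnorm (2*n) u3 * rnorm (2*n) u4)"
    using assms unfolding Hyp_def by blast
  thus "tensor_pair (2*n) (T_tensor n m \<sigma> a) u1 u2 u3 u4 \<le>
       (dotp (2*n) u1 u2 * dotp (2*n) u3 u4 + dotp (2*n) u1 u3 * dotp (2*n) u2 u4 + dotp (2*n) u1 u4 * dotp (2*n) u2 u3)
     + \<delta> * (rnorm (2*n) u1 * rnorm (2*n) u2 * rnorm (2*n) u3 * rnorm (2*n) u4)"
   "tensor_pair (2*n) (T_tensor n m \<sigma> a) u1 u2 u3 u4 \<ge>
       (dotp (2*n) u1 u2 * dotp (2*n) u3 u4 + dotp (2*n) u1 u3 * dotp (2*n) u2 u4 + dotp (2*n) u1 u4 * dotp (2*n) u2 u3)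
     - \<delta> * (rnorm (2*n) u1 * rnorm (2*n) u2 * rnorm (2*n) u3 * rnorm (2*n) u4)"
    unfolding abs_le_iff by linarith+
qed

lemma rnorm_sq: "(rnorm N p)\<^sup>2 = dotp N p p"
  unfolding rnorm_dot by (simp add: dotp_def sum_nonneg)

lemma rnorm_M: "rnorm (2*n) (Mop n p) = rnorm (2*n) p"
  unfolding rnorm_dot dot_MM ..

lemma dot_M_swap': "dotp (2*n) (Mop n u) v = - dotp (2*n) u (Mop n v)"
  using dot_M_swap[of n u v] by simp

lemma dot_self_M: "dotp (2*n) (Mop n u) u = 0"
  using dot_M_self[of n u] by (simp add: dot_comm)

definition SQQ :: "nat \<Rightarrow> nat \<Rightarrow> (nat \<Rightarrow> nat \<Rightarrow> complex) \<Rightarrow> (nat \<Rightarrow> real) \<Rightarrow> (nat \<Rightarrow> real) \<Rightarrow> real" where "SQQ n m a p q = (\<Sum>i<m. Qf n (a i) p * Qf n (a i) q)"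
definition SQB :: "nat \<Rightarrow> nat \<Rightarrow> (nat \<Rightarrow> nat \<Rightarrow> complex) \<Rightarrow> (nat \<Rightarrow> real) \<Rightarrow> (nat \<Rightarrow> real) \<Rightarrow> real" where "SQB n m a p q = (\<Sum>i<m. Qf n (a i) p * Bf n (a i) p q)"
definition SBB :: "nat \<Rightarrow> nat \<Rightarrow> (nat \<Rightarrow> nat \<Rightarrow> complex) \<Rightarrow> (nat \<Rightarrow> real) \<Rightarrow> (nat \<Rightarrow> real) \<Rightarrow> real" where "SBB n m a p q = (\<Sum>i<m. (Bf n (a i) p q)\<^sup>2)"

lemma SQQ_W: "(1 / cT m \<sigma>) * SQQ n m a p q =
   tensor_pair (2*n) (T_tensor n m \<sigma> a) p p q q + tensor_pair (2*n) (T_tensor n m \<sigma> a) p p (Mop n q) (Mop n q)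
 + tensor_pair (2*n) (T_tensor n m \<sigma> a) (Mop n p) (Mop n p) q q + tensor_pair (2*n) (T_tensor n m \<sigma> a) (Mop n p) (Mop n p) (Mop n q) (Mop n q)"
  unfolding tp_T distrib_left[symmetric] sum.distrib[symmetric] SQQ_def
  by (intro arg_cong[where f="\<lambda>x. _ * x"] sum.cong) (simp_all add: Qf_def power2_eq_square algebra_simps)

lemma SQB_W: "(1 / cT m \<sigma>) * SQB n m a p q =
   tensor_pair (2*n) (T_tensor n m \<sigma> a) p p p q + tensor_pair (2*n) (T_tensor n m \<sigma> a) p p (Mop n p) (Mop n q)
 + tensor_pair (2*n) (T_tensor n m \<sigma> a) (Mop n p) (Mop n p) p q + tensor_pair (2*n) (T_tensor n m \<sigma> a) (Mop n p) (Mop n p) (Mop n p) (Mop n q)"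
  unfolding tp_T distrib_left[symmetric] sum.distrib[symmetric] SQB_def
  by (intro arg_cong[where f="\<lambda>x. _ * x"] sum.cong) (simp_all add: Qf_def Bf_def power2_eq_square algebra_simps)

lemma SBB_W: "(1 / cT m \<sigma>) * SBB n m a p q =
   tensor_pair (2*n) (T_tensor n m \<sigma> a) p p q q + 2 * tensor_pair (2*n) (T_tensor n m \<sigma> a) p q (Mop n p) (Mop n q)
 + tensor_pair (2*n) (T_tensor n m \<sigma> a) (Mop n p) (Mop n p) (Mop n q) (Mop n q)"
  unfolding tp_T SBB_def
  by (simp add: sum.distrib[symmetric] sum_distrib_left Bf_def power2_eq_square algebra_simps)


lemma rr: "rnorm N p * rnorm N p = dotp N p p"
  using rnorm_sq[of N p] by (simp add: power2_eq_square)

lemma near_QQ: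
  assumes H: "Hyp n m a \<sigma> \<delta>" and p: "p \<in> rvecs (2*n)" and q: "q \<in> rvecs (2*n)"
  shows "(1 / cT m \<sigma>) * SQQ n m a p q \<le> 4*(dotp (2*n) p p*dotp (2*n) q q) + 4*(dotp (2*n) p q * dotp (2*n) p q) + 4*(dotp (2*n) p (Mop n q) * dotp (2*n) p (Mop n q))
            + 4*(\<delta>*(dotp (2*n) p p * dotp (2*n) q q))"
    "(1 / cT m \<sigma>) * SQQ n m a p q \<ge> 4*(dotp (2*n) p p*dotp (2*n) q q) + 4*(dotp (2*n) p q * dotp (2*n) p q) + 4*(dotp (2*n) p (Mop n q) * dotp (2*n) p (Mop n q))
            - 4*(\<delta>*(dotp (2*n) p p * dotp (2*n) q q))"
proof -
  let ?W = "tensor_pair (2*n) (T_tensor n m \<sigma> a)"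
  let ?d = "dotp (2*n)"
  let ?P = "?d p p" let ?Q = "?d q q"
  have Mp: "Mop n p \<in> rvecs (2*n)" and Mq: "Mop n q \<in> rvecs (2*n)" by (rule Mop_rvecs)+
  have nn: "rnorm (2*n) p * rnorm (2*n) p * rnorm (2*n) q * rnorm (2*n) q = ?P * ?Q"
    by (simp add: rr[symmetric] ac_simps)
  have nnM: "rnorm (2*n) (Mop n p) * rnorm (2*n) (Mop n p) * rnorm (2*n) q * rnorm (2*n) q = ?P * ?Q"
    "rnorm (2*n) p * rnorm (2*n) p * rnorm (2*n) (Mop n q) * rnorm (2*n) (Mop n q) = ?P * ?Q"
    "rnorm (2*n) (Mop n p) * rnorm (2*n) (Mop n p) * rnorm (2*n) (Mop n q) * rnorm (2*n) (Mop n q) = ?P * ?Q"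
    using nn by (simp_all add: rnorm_M)
  note h1 = HypD[OF H p p q q, unfolded nn]
  note h2 = HypD[OF H p p Mq Mq, unfolded nnM dot_MM]
  note h3 = HypD[OF H Mp Mp q q, unfolded nnM dot_MM, unfolded dot_M_swap']
  note h4 = HypD[OF H Mp Mp Mq Mq, unfolded nnM dot_MM]
  have e: "(1 / cT m \<sigma>) * SQQ n m a p q = ?W p p q q + ?W p p (Mop n q) (Mop n q) + ?W (Mop n p) (Mop n p) q q + ?W (Mop n p) (Mop n p) (Mop n q) (Mop n q)"
    by (rule SQQ_W)
  show "(1 / cT m \<sigma>) * SQQ n m a p q \<le> 4*(?P*?Q) + 4*(?d p q * ?d p q) + 4*(?d p (Mop n q) * ?d p (Mop n q)) + 4*(\<delta>*(?P * ?Q))"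
    unfolding e using h1(1) h2(1) h3(1) h4(1) by linarith
  show "(1 / cT m \<sigma>) * SQQ n m a p q \<ge> 4*(?P*?Q) + 4*(?d p q * ?d p q) + 4*(?d p (Mop n q) * ?d p (Mop n q)) - 4*(\<delta>*(?P * ?Q))"
    unfolding e using h1(2) h2(2) h3(2) h4(2) by linarith
qed

lemma near_QB:
  assumes H: "Hyp n m a \<sigma> \<delta>" and p: "p \<in> rvecs (2*n)" and q: "q \<in> rvecs (2*n)"
  shows "(1 / cT m \<sigma>) * SQB n m a p q \<le> 8*(dotp (2*n) p p*dotp (2*n) p q) + 4*(\<delta>*(dotp (2*n) p p * (rnorm (2*n) p * rnorm (2*n) q)))"
    "(1 / cT m \<sigma>) * SQB n m a p q \<ge> 8*(dotp (2*n) p p*dotp (2*n) p q) - 4*(\<delta>*(dotp (2*n) p p * (rnorm (2*n) p * rnorm (2*n) q)))"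
proof -
  let ?W = "tensor_pair (2*n) (T_tensor n m \<sigma> a)"
  let ?d = "dotp (2*n)"
  let ?P = "?d p p" let ?R = "rnorm (2*n) p * rnorm (2*n) q"
  have Mp: "Mop n p \<in> rvecs (2*n)" and Mq: "Mop n q \<in> rvecs (2*n)" by (rule Mop_rvecs)+
  have nn: "rnorm (2*n) p * rnorm (2*n) p * rnorm (2*n) p * rnorm (2*n) q = ?P * ?R"
    by (simp add: rr[symmetric] ac_simps)
  have nnM: "rnorm (2*n) p * rnorm (2*n) p * rnorm (2*n) (Mop n p) * rnorm (2*n) (Mop n q) = ?P * ?R"
    "rnorm (2*n) (Mop n p) * rnorm (2*n) (Mop n p) * rnorm (2*n) p * rnorm (2*n) q = ?P * ?R"
    "rnorm (2*n) (Mop n p) * rnorm (2*n) (Mop n p) * rnorm (2*n) (Mop n p) * rnorm (2*n) (Mop n q) = ?P * ?R"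
    using nn by (simp_all add: rnorm_M)
  note h1 = HypD[OF H p p p q, unfolded nn]
  note h2 = HypD[OF H p p Mp Mq, unfolded nnM dot_MM dot_M_self]
  note h3 = HypD[OF H Mp Mp p q, unfolded nnM dot_MM dot_self_M]
  note h4 = HypD[OF H Mp Mp Mp Mq, unfolded nnM dot_MM]
  have e: "(1 / cT m \<sigma>) * SQB n m a p q = ?W p p p q + ?W p p (Mop n p) (Mop n q) + ?W (Mop n p) (Mop n p) p q + ?W (Mop n p) (Mop n p) (Mop n p) (Mop n q)"
    by (rule SQB_W)
  show "(1 / cT m \<sigma>) * SQB n m a p q \<le> 8*(?P*?d p q) + 4*(\<delta>*(?P * ?R))"
    unfolding e using h1(1) h2(1) h3(1) h4(1) by (simp only: ac_simps mult_zero_left mult_zero_right add_0_left add_0_right; linarith)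
  show "(1 / cT m \<sigma>) * SQB n m a p q \<ge> 8*(?P*?d p q) - 4*(\<delta>*(?P * ?R))"
    unfolding e using h1(2) h2(2) h3(2) h4(2) by (simp only: ac_simps mult_zero_left mult_zero_right add_0_left add_0_right; linarith)
qed

lemma near_BB:
  assumes H: "Hyp n m a \<sigma> \<delta>" and p: "p \<in> rvecs (2*n)" and q: "q \<in> rvecs (2*n)"
  shows "(1 / cT m \<sigma>) * SBB n m a p q \<le> 2*(dotp (2*n) p p*dotp (2*n) q q) + 6*(dotp (2*n) p q * dotp (2*n) p q) - 2*(dotp (2*n) p (Mop n q) * dotp (2*n) p (Mop n q))
            + 4*(\<delta>*(dotp (2*n) p p * dotp (2*n) q q))"
    "(1 / cT m \<sigma>) * SBB n m a p q \<ge> 2*(dotp (2*n) p p*dotp (2*n) q q) + 6*(dotp (2*n) p q * dotp (2*n) p q) - 2*(dotp (2*n) p (Mop n q) * dotp (2*n) p (Mop n q))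
            - 4*(\<delta>*(dotp (2*n) p p * dotp (2*n) q q))"
proof -
  let ?W = "tensor_pair (2*n) (T_tensor n m \<sigma> a)"
  let ?d = "dotp (2*n)"
  let ?P = "?d p p" let ?Q = "?d q q"
  have Mp: "Mop n p \<in> rvecs (2*n)" and Mq: "Mop n q \<in> rvecs (2*n)" by (rule Mop_rvecs)+
  have nn: "rnorm (2*n) p * rnorm (2*n) p * rnorm (2*n) q * rnorm (2*n) q = ?P * ?Q"
    by (simp add: rr[symmetric] ac_simps)
  have nnM: "rnorm (2*n) p * rnorm (2*n) q * rnorm (2*n) (Mop n p) * rnorm (2*n) (Mop n q) = ?P * ?Q"
    "rnorm (2*n) (Mop n p) * rnorm (2*n) (Mop n p) * rnorm (2*n) (Mop n q) * rnorm (2*n) (Mop n q) = ?P * ?Q"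
    unfolding rnorm_M using nn by (simp_all add: ac_simps)
  have sw: "?d q (Mop n p) = - ?d p (Mop n q)" using dot_M_swap[of n q p] dot_comm[of "2*n" "Mop n q" p] by simp
  note h1 = HypD[OF H p p q q, unfolded nn]
  note h2 = HypD[OF H p q Mp Mq, unfolded nnM dot_MM dot_M_self sw]
  note h4 = HypD[OF H Mp Mp Mq Mq, unfolded nnM dot_MM]
  have e: "(1 / cT m \<sigma>) * SBB n m a p q = ?W p p q q + 2 * ?W p q (Mop n p) (Mop n q) + ?W (Mop n p) (Mop n p) (Mop n q) (Mop n q)"
    by (rule SBB_W)
  show "(1 / cT m \<sigma>) * SBB n m a p q \<le> 2*(?P*?Q) + 6*(?d p q * ?d p q) - 2*(?d p (Mop n q) * ?d p (Mop n q)) + 4*(\<delta>*(?P * ?Q))"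
    unfolding e using h1(1) h2(1) h4(1) by (simp only: ac_simps mult_zero_left mult_zero_right add_0_left add_0_right mult_minus_left mult_minus_right; linarith)
  show "(1 / cT m \<sigma>) * SBB n m a p q \<ge> 2*(?P*?Q) + 6*(?d p q * ?d p q) - 2*(?d p (Mop n q) * ?d p (Mop n q)) - 4*(\<delta>*(?P * ?Q))"
    unfolding e using h1(2) h2(2) h4(2) by (simp only: ac_simps mult_zero_left mult_zero_right add_0_left add_0_right mult_minus_left mult_minus_right; linarith)
qed


lemma core_real:
  fixes \<alpha> \<tau> X Y :: real
  assumes a0: "0 \<le> \<alpha>" and t0: "0 \<le> \<tau>" and X: "X = \<alpha>^2" and Y: "Y = \<tau>^2" and YX: "Y \<le> X"
    and h1: "2*X^2 - X - Y \<le> 1/1000*X^2 + 1/1000*X"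
    and h2: "-2*X^2 + X + Y \<le> 1/1000*X^2 + 1/1000*X"
    and h3: "2*(\<tau>*X) - 2*\<tau> \<le> 1/1000*(\<alpha>*X) + 1/1000*\<alpha>"
    and h4: "-2*(\<tau>*X) + 2*\<tau> \<le> 1/1000*(\<alpha>*X) + 1/1000*\<alpha>"
    and h5: "2*X + 4*Y - 2 + 3/1000*X + 1/1000 \<ge> 0"
    and h6: "2*\<eta> \<le> 4/1000*\<eta> + 8004/1000*\<eta>^2"
    and e: "\<eta> = X - 2*\<tau> + 1" and e0: "0 \<le> \<eta>"
  shows "\<eta> = 0"
proof -
  have X0: "X \<ge> 0" unfolding X by simp
  have S1: "X \<le> 101/100"
  proof (rule ccontr)
    assume "\<not> ?thesis" hence Xb: "X > 101/100" by simp
    hence "X * X > X * (101/100)" by (intro mult_strict_left_mono) auto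
    hence "X^2 > 101/100 * X" by (simp add: power2_eq_square mult.commute)
    thus False using h1 YX Xb by linarith
  qed
  have al: "\<alpha> \<le> 101/100"
  proof (cases "\<alpha> \<le> 1")
    case False
    hence "\<alpha> * 1 \<le> \<alpha> * \<alpha>" by (intro mult_left_mono) auto
    hence "\<alpha> \<le> X" unfolding X by (simp add: power2_eq_square)
    thus ?thesis using S1 by simp
  qed simp
  have S2: "X \<ge> 63/100"
  proof (rule ccontr)
    assume "\<not> ?thesis" hence Xb: "X < 63/100" by simp
    have "X * X \<le> X * (63/100)" using Xb X0 by (intro mult_left_mono) auto
    hence XX: "X^2 \<le> 63/100 * X" by (simp add: power2_eq_square mult.commute)
    show False using h5 h2 XX Xb by linarith
  qed
  have "X * X \<ge> X * (63/100)" using S2 X0 by (intro mult_left_mono) auto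
  hence XX2: "X^2 \<ge> 63/100 * X" by (simp add: power2_eq_square mult.commute)
  have S3: "Y \<ge> 16/100" using h1 XX2 S2 by linarith
  have tau: "\<tau> \<ge> 4/10"
  proof (rule ccontr)
    assume "\<not> ?thesis" hence "\<tau> < 4/10" by simp
    hence "\<tau>^2 < (4/10)^2" using t0 by (intro power_strict_mono) auto
    thus False using S3 unfolding Y by (simp add: power_divide)
  qed
  have aX: "\<alpha> * X \<le> 101/100 * (101/100)" using al S1 a0 X0 by (intro mult_mono) auto
  have S4a: "X \<le> 1 + 3/1000"
  proof (rule ccontr)
    assume nt: "\<not> ?thesis"
    hence "\<tau> * (X - 1) \<ge> 4/10 * (X - 1)" using tau by (intro mult_right_mono) auto
    hence "\<tau> * X - \<tau> \<ge> 4/10 * X - 4/10" by (simp only: right_diff_distrib mult_1_right)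
    thus False using h3 aX al nt by linarith
  qed
  have S4b: "X \<ge> 1 - 3/1000"
  proof (rule ccontr)
    assume nt: "\<not> ?thesis"
    hence "\<tau> * (1 - X) \<ge> 4/10 * (1 - X)" using tau by (intro mult_right_mono) auto
    hence "\<tau> - \<tau> * X \<ge> 4/10 - 4/10 * X" by (simp only: right_diff_distrib mult_1_right)
    thus False using h4 aX al nt by linarith
  qed
  have "X * X \<ge> X * (997/1000)" using S4b X0 by (intro mult_left_mono) auto
  hence XX3: "X^2 \<ge> 997/1000 * X" by (simp add: power2_eq_square mult.commute)
  have S5a: "Y \<ge> 989/1000" using h1 XX3 S4b by linarith
  have S5: "\<tau> \<ge> 99/100"
  proof (rule ccontr)
    assume "\<not> ?thesis" hence "\<tau> < 99/100" by simp
    hence "\<tau>^2 < (99/100)^2" using t0 by (intro power_strict_mono) auto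
    thus False using S5a unfolding Y by (simp add: power_divide)
  qed
  have eb: "\<eta> \<le> 23/1000" using e S4a S5 by linarith
  have "\<eta> * \<eta> \<le> \<eta> * (23/1000)" using eb e0 by (intro mult_left_mono) auto
  hence "\<eta>^2 \<le> 23/1000 * \<eta>" by (simp add: power2_eq_square mult.commute)
  hence "\<eta> \<le> 0" using h6 e0 by linarith
  thus ?thesis using e0 by simp
qed


lemma dot_diff: "dotp N w (\<lambda>j. u j - v j) = dotp N w u - dotp N w v"
  unfolding dotp_def by (simp add: sum_subtractf algebra_simps)

lemma Mop_diff: "Mop n (\<lambda>j. u j - v j) = (\<lambda>j. Mop n u j - Mop n v j)"
  by (auto simp: Mop_def fun_eq_iff)

lemma Bf_self: "Bf n b u u = Qf n b u" unfolding Bf_def Qf_def by (simp add: power2_eq_square)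
lemma Bf_sym: "Bf n b u v = Bf n b v u" unfolding Bf_def by (simp add: mult.commute)

lemma half_le: "2*P - R = (S::real) \<Longrightarrow> S \<ge> 0 \<Longrightarrow> R/2 \<le> P" by linarith

lemma key_pt:
  fixes x x' y y' :: real
  shows "((y*(x-y) + y'*(x'-y'))\<^sup>2 - ((x-y)\<^sup>2 + (x'-y')\<^sup>2)\<^sup>2) / 2 \<le> (x\<^sup>2 + x'\<^sup>2 - (y\<^sup>2 + y'\<^sup>2)) * (x*(x-y) + x'*(x'-y'))"
proof -
  have "2*((x\<^sup>2 + x'\<^sup>2 - (y\<^sup>2 + y'\<^sup>2)) * (x*(x-y) + x'*(x'-y'))) - ((y*(x-y) + y'*(x'-y'))\<^sup>2 - ((x-y)\<^sup>2 + (x'-y')\<^sup>2)\<^sup>2)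
     = 3 * ((y*(x-y) + y'*(x'-y')) + ((x-y)\<^sup>2 + (x'-y')\<^sup>2))\<^sup>2"
    by algebra
  moreover have "3 * ((y*(x-y) + y'*(x'-y')) + ((x-y)\<^sup>2 + (x'-y')\<^sup>2))\<^sup>2 \<ge> 0" by simp
  ultimately show ?thesis by (rule half_le)
qed

lemma Gh_bound:
  fixes u r :: "nat \<Rightarrow> real"
  defines "h \<equiv> (\<lambda>j. u j - r j)"
  shows "(SBB n m a r h - SQQ n m a h h) / 2 \<le> (\<Sum>i<m. (Qf n (a i) u - Qf n (a i) r) * Bf n (a i) u h)"
proof -
  have "(SBB n m a r h - SQQ n m a h h) / 2 = (\<Sum>i<m. ((Bf n (a i) r h)\<^sup>2 - Qf n (a i) h * Qf n (a i) h) / 2)"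
    unfolding SBB_def SQQ_def by (simp add: sum_subtractf[symmetric] sum_divide_distrib[symmetric])
  also have "\<dots> \<le> (\<Sum>i<m. (Qf n (a i) u - Qf n (a i) r) * Bf n (a i) u h)"
  proof (rule sum_mono)
    fix i
    let ?L = "Lf n (a i)"
    have l1: "?L h = ?L u - ?L r" unfolding h_def Lf_def dot_diff ..
    have l2: "?L (Mop n h) = ?L (Mop n u) - ?L (Mop n r)" unfolding h_def Mop_diff Lf_def dot_diff ..
    show "((Bf n (a i) r h)\<^sup>2 - Qf n (a i) h * Qf n (a i) h) / 2 \<le> (Qf n (a i) u - Qf n (a i) r) * Bf n (a i) u h"
      unfolding Bf_def Qf_def l1 l2
      using key_pt[of "?L r" "?L u" "?L (Mop n r)" "?L (Mop n u)"] by (simp add: power2_eq_square)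
  qed
  finally show ?thesis .
qed


lemma cs_dot: "(dotp N u r)\<^sup>2 \<le> dotp N u u * dotp N r r"
  using Cauchy_Schwarz_ineq_sum[of u r "{..<N}"] unfolding dotp_def by (simp add: power2_eq_square)

lemma dot_self_nonneg: "dotp N u u \<ge> 0" unfolding dotp_def by (simp add: sum_nonneg)

lemma dot_self_zero: "dotp N u u = 0 \<Longrightarrow> j < N \<Longrightarrow> u j = 0"
  using rnorm_zero[of N u j] unfolding rnorm_dot by simp

lemma rvecs_eq: "u \<in> rvecs N \<Longrightarrow> r \<in> rvecs N \<Longrightarrow> dotp N (\<lambda>j. u j - r j) (\<lambda>j. u j - r j) = 0 \<Longrightarrow> u = r"
  by (rule ext, case_tac "x < N") (auto dest: dot_self_zero simp: rvecs_def)

lemma cancelK: "(K::real) > 0 \<Longrightarrow> K*x \<le> K*y \<Longrightarrow> x \<le> y" by simp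

lemma core_vec:
  assumes H: "Hyp n m a \<sigma> (1/1000)" and c: "cT m \<sigma> > 0"
    and u: "u \<in> rvecs (2*n)" and r: "r \<in> rvecs (2*n)"
    and Gu: "(\<Sum>i<m. (Qf n (a i) u - Qf n (a i) r) * Bf n (a i) u u) = 0"
    and Gr: "(\<Sum>i<m. (Qf n (a i) u - Qf n (a i) r) * Bf n (a i) u r) = 0"
    and Gh: "(\<Sum>i<m. (Qf n (a i) u - Qf n (a i) r) * Bf n (a i) u (\<lambda>j. u j - r j)) = 0"
    and Hr: "(\<Sum>i<m. 8*(Bf n (a i) u r)\<^sup>2 + 4*((Qf n (a i) u - Qf n (a i) r) * Qf n (a i) r)) \<ge> 0"
    and orth: "dotp (2*n) u (Mop n r) = 0" and t0: "dotp (2*n) u r \<ge> 0"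
  shows "u = r"
proof -
  define h where "h = (\<lambda>j. u j - r j)"
  have hr: "h \<in> rvecs (2*n)" using u r unfolding h_def rvecs_def by auto
  define C where "C = 1 / cT m \<sigma>"
  have C0: "C > 0" using c unfolding C_def by simp
  have g1: "SQQ n m a u u = SQQ n m a r u"
    using Gu unfolding SQQ_def Bf_self by (simp add: sum_subtractf left_diff_distrib)
  have g2: "SQB n m a u r = SQB n m a r u"
    using Gr unfolding SQB_def by (simp add: sum_subtractf left_diff_distrib Bf_sym[of n _ r u])
  have g3: "8 * SBB n m a u r + 4 * SQQ n m a u r - 4 * SQQ n m a r r \<ge> 0"
    using Hr unfolding SBB_def SQQ_def by (simp add: sum.distrib sum_subtractf left_diff_distrib sum_distrib_left)
  have g4: "SBB n m a r h - SQQ n m a h h \<le> 0"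
    using Gh_bound[of n m a r u] Gh unfolding h_def by simp
  have c1: "C * SQQ n m a u u = C * SQQ n m a r u" using g1 by simp
  have c2: "C * SQB n m a u r = C * SQB n m a r u" using g2 by simp
  have c3: "8 * (C * SBB n m a u r) + 4 * (C * SQQ n m a u r) - 4 * (C * SQQ n m a r r) \<ge> 0"
  proof -
    have "C * (8 * SBB n m a u r + 4 * SQQ n m a u r - 4 * SQQ n m a r r) \<ge> 0" using g3 C0 by simp
    thus ?thesis by (simp add: algebra_simps)
  qed
  have c4: "C * SBB n m a r h - C * SQQ n m a h h \<le> 0"
  proof -
    have "C * (SBB n m a r h - SQQ n m a h h) \<le> 0" using g4 C0 by (simp add: mult_nonneg_nonpos)
    thus ?thesis by (simp add: algebra_simps)
  qed
  define Su where "Su = dotp (2*n) u u"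
  define \<rho> where "\<rho> = dotp (2*n) r r"
  define t where "t = dotp (2*n) u r"
  define \<eta> where "\<eta> = dotp (2*n) h h"
  define A where "A = rnorm (2*n) u"
  define b where "b = rnorm (2*n) r"
  have z1: "dotp (2*n) u (Mop n u) = 0" "dotp (2*n) r (Mop n r) = 0" "dotp (2*n) h (Mop n h) = 0" by (rule dot_M_self)+
  have z2: "dotp (2*n) r (Mop n u) = 0" using dot_M_swap[of n r u] orth dot_comm[of "2*n" "Mop n r" u] by simp
  have tr: "dotp (2*n) r u = t" unfolding t_def by (rule dot_comm)
  have z3: "dotp (2*n) r (Mop n h) = 0"
    unfolding h_def Mop_diff dot_diff using z2 z1(2) by simp
  have eta: "\<eta> = Su - 2*t + \<rho>"
    unfolding \<eta>_def Su_def t_def \<rho>_def h_def dotp_def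
    by (simp add: sum_subtractf sum.distrib algebra_simps sum_distrib_left dot_comm)
  note nQuu = near_QQ[OF H u u, folded C_def Su_def, unfolded z1]
  note nQru = near_QQ[OF H r u, folded C_def Su_def \<rho>_def, unfolded z2 tr]
  note nQur = near_QQ[OF H u r, folded C_def Su_def \<rho>_def t_def, unfolded orth]
  note nQrr = near_QQ[OF H r r, folded C_def \<rho>_def, unfolded z1]
  note nBur = near_BB[OF H u r, folded C_def Su_def \<rho>_def t_def, unfolded orth]
  note nBrh = near_BB[OF H r hr, folded C_def \<rho>_def \<eta>_def, unfolded z3]
  note nQhh = near_QQ[OF H hr hr, folded C_def \<eta>_def, unfolded z1]
  note nSur = near_QB[OF H u r, folded C_def Su_def t_def A_def b_def]
  note nSru = near_QB[OF H r u, folded C_def \<rho>_def A_def b_def, unfolded tr]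
  have E1: "8*(Su*Su) - 4*(1/1000*(Su*Su)) \<le> 4*(\<rho>*Su) + 4*(t*t) + 4*(1/1000*(\<rho>*Su))"
    using nQuu(2) nQru(1) c1 by simp
  have E1': "8*(Su*Su) + 4*(1/1000*(Su*Su)) \<ge> 4*(\<rho>*Su) + 4*(t*t) - 4*(1/1000*(\<rho>*Su))"
    using nQuu(1) nQru(2) c1 by simp
  have E2: "8*(Su*t) - 4*(1/1000*(Su*(A*b))) \<le> 8*(\<rho>*t) + 4*(1/1000*(\<rho>*(b*A)))"
    using nSur(2) nSru(1) c2 by simp
  have E2': "8*(Su*t) + 4*(1/1000*(Su*(A*b))) \<ge> 8*(\<rho>*t) - 4*(1/1000*(\<rho>*(b*A)))"
    using nSur(1) nSru(2) c2 by simp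
  have E3: "2*(Su*\<rho>) + 4*(t*t) - 2*(\<rho>*\<rho>) + 3/1000*(Su*\<rho>) + 1/1000*(\<rho>*\<rho>) \<ge> 0"
    using nBur(1) nQur(1) nQrr(2) c3 by simp
  have E4: "2*(\<rho>*\<eta>) - 4*(1/1000*(\<rho>*\<eta>)) - (4*(\<eta>*\<eta>) + 4*(\<eta>*\<eta>) + 4*(1/1000*(\<eta>*\<eta>))) \<le> 0"
  proof -
    have "6*(dotp (2*n) r h * dotp (2*n) r h) \<ge> 0" by simp
    thus ?thesis using nBrh(2) nQhh(1) c4 by linarith
  qed
  have s0: "Su \<ge> 0" unfolding Su_def by (rule dot_self_nonneg)
  have r0: "\<rho> \<ge> 0" unfolding \<rho>_def by (rule dot_self_nonneg)
  have e0: "\<eta> \<ge> 0" unfolding \<eta>_def by (rule dot_self_nonneg)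
  have CS: "t*t \<le> Su*\<rho>" using cs_dot[of "2*n" u r] unfolding t_def Su_def \<rho>_def by (simp add: power2_eq_square)
  have "\<eta> = 0"
  proof (cases "\<rho> = 0")
    case True
    hence "t*t \<le> 0" using CS by simp
    hence t: "t = 0" by (simp add: mult_le_0_iff) linarith
    hence "Su*Su \<le> 0" using E1 True by simp
    hence "Su = 0" using s0 by (simp add: mult_le_0_iff)
    thus ?thesis using eta t True by simp
  next
    case False
    hence rp: "\<rho> > 0" using r0 by simp
    have AA: "A*A = Su" unfolding A_def Su_def by (rule rr)
    have bb: "b*b = \<rho>" unfolding b_def \<rho>_def by (rule rr)
    have A0: "A \<ge> 0" unfolding A_def by (rule rnorm_nonneg)
    have b0: "b > 0" using bb rp rnorm_nonneg[of "2*n" r] unfolding b_def by (metis less_eq_real_def mult_zero_left)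
    define K where "K = \<rho>*\<rho>"
    have K0: "K > 0" unfolding K_def using rp by simp
    define X where "X = Su/\<rho>"
    define \<alpha> where "\<alpha> = A/b"
    define \<tau> where "\<tau> = t/\<rho>"
    define Y where "Y = \<tau>^2"
    define \<eta>' where "\<eta>' = \<eta>/\<rho>"
    have q1: "Su*Su = K*X^2" unfolding K_def X_def using rp by (simp add: field_simps power2_eq_square)
    have q2: "\<rho>*Su = K*X" "Su*\<rho> = K*X" unfolding K_def X_def using rp by (simp_all add: field_simps power2_eq_square)
    have q3: "t*t = K*Y" unfolding K_def Y_def \<tau>_def using rp by (simp add: field_simps power2_eq_square)
    have q4: "Su*t = K*(\<tau>*X)" unfolding K_def X_def \<tau>_def using rp by (simp add: field_simps power2_eq_square)
    have q5: "\<rho>*t = K*\<tau>" unfolding K_def \<tau>_def using rp by (simp add: field_simps power2_eq_square)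
    have q6: "Su*(A*b) = K*(\<alpha>*X)" unfolding K_def X_def \<alpha>_def using rp b0 bb[symmetric]
      by (simp add: field_simps power2_eq_square)
    have q7: "\<rho>*(b*A) = K*\<alpha>" unfolding K_def \<alpha>_def using rp b0 bb[symmetric]
      by (simp add: field_simps power2_eq_square)
    have q8: "\<rho>*\<rho> = K" unfolding K_def ..
    have q9: "\<rho>*\<eta> = K*\<eta>'" unfolding K_def \<eta>'_def using rp by (simp add: field_simps power2_eq_square)
    have q10: "\<eta>*\<eta> = K*\<eta>'^2" unfolding K_def \<eta>'_def using rp by (simp add: field_simps power2_eq_square)
    have Xa: "X = \<alpha>^2" unfolding X_def \<alpha>_def using AA bb b0 by (simp add: power_divide power2_eq_square)
    have a0: "0 \<le> \<alpha>" unfolding \<alpha>_def using A0 b0 by simp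
    have ta0: "0 \<le> \<tau>" unfolding \<tau>_def using t0 rp unfolding t_def by simp
    have YX: "Y \<le> X"
      by (rule cancelK[OF K0]) (use CS q3 q2 in simp)
    have h1: "2*X^2 - X - Y \<le> 1/1000*X^2 + 1/1000*X"
    proof (rule cancelK[OF K0])
      have eqL: "K*(2*X^2 - X - Y) = 2*(K*X^2) - K*X - K*Y" by (simp add: algebra_simps)
      have eqR: "K*(1/1000*X^2 + 1/1000*X) = 1/1000*(K*X^2) + 1/1000*(K*X)" by (simp add: algebra_simps)
      have "2*(K*X^2) - K*X - K*Y \<le> 1/1000*(K*X^2) + 1/1000*(K*X)" using E1[unfolded q1 q2 q3] by linarith
      thus "K*(2*X^2 - X - Y) \<le> K*(1/1000*X^2 + 1/1000*X)" unfolding eqL eqR .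
    qed
    have h2: "-2*X^2 + X + Y \<le> 1/1000*X^2 + 1/1000*X"
    proof (rule cancelK[OF K0])
      have eqL: "K*(-2*X^2 + X + Y) = -2*(K*X^2) + K*X + K*Y" by (simp add: algebra_simps)
      have eqR: "K*(1/1000*X^2 + 1/1000*X) = 1/1000*(K*X^2) + 1/1000*(K*X)" by (simp add: algebra_simps)
      have "-2*(K*X^2) + K*X + K*Y \<le> 1/1000*(K*X^2) + 1/1000*(K*X)" using E1'[unfolded q1 q2 q3] by linarith
      thus "K*(-2*X^2 + X + Y) \<le> K*(1/1000*X^2 + 1/1000*X)" unfolding eqL eqR .
    qed
    have h3: "2*(\<tau>*X) - 2*\<tau> \<le> 1/1000*(\<alpha>*X) + 1/1000*\<alpha>"
    proof (rule cancelK[OF K0])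
      have eqL: "K*(2*(\<tau>*X) - 2*\<tau>) = 2*(K*(\<tau>*X)) - 2*(K*\<tau>)" by (simp add: algebra_simps)
      have eqR: "K*(1/1000*(\<alpha>*X) + 1/1000*\<alpha>) = 1/1000*(K*(\<alpha>*X)) + 1/1000*(K*\<alpha>)" by (simp add: algebra_simps)
      have "2*(K*(\<tau>*X)) - 2*(K*\<tau>) \<le> 1/1000*(K*(\<alpha>*X)) + 1/1000*(K*\<alpha>)" using E2[unfolded q4 q5 q6 q7] by linarith
      thus "K*(2*(\<tau>*X) - 2*\<tau>) \<le> K*(1/1000*(\<alpha>*X) + 1/1000*\<alpha>)" unfolding eqL eqR .
    qed
    have h4: "-2*(\<tau>*X) + 2*\<tau> \<le> 1/1000*(\<alpha>*X) + 1/1000*\<alpha>"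
    proof (rule cancelK[OF K0])
      have eqL: "K*(-2*(\<tau>*X) + 2*\<tau>) = -2*(K*(\<tau>*X)) + 2*(K*\<tau>)" by (simp add: algebra_simps)
      have eqR: "K*(1/1000*(\<alpha>*X) + 1/1000*\<alpha>) = 1/1000*(K*(\<alpha>*X)) + 1/1000*(K*\<alpha>)" by (simp add: algebra_simps)
      have "-2*(K*(\<tau>*X)) + 2*(K*\<tau>) \<le> 1/1000*(K*(\<alpha>*X)) + 1/1000*(K*\<alpha>)" using E2'[unfolded q4 q5 q6 q7] by linarith
      thus "K*(-2*(\<tau>*X) + 2*\<tau>) \<le> K*(1/1000*(\<alpha>*X) + 1/1000*\<alpha>)" unfolding eqL eqR .
    qed
    have h5: "2*X + 4*Y - 2 + 3/1000*X + 1/1000 \<ge> 0"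
    proof -
      have "K*(2*X + 4*Y - 2 + 3/1000*X + 1/1000) \<ge> 0"
      proof -
        have eqL: "K*(2*X + 4*Y - 2 + 3/1000*X + 1/1000) = 2*(K*X) + 4*(K*Y) - 2*K + 3/1000*(K*X) + 1/1000*K" by (simp add: algebra_simps)
        have "2*(K*X) + 4*(K*Y) - 2*K + 3/1000*(K*X) + 1/1000*K \<ge> 0" using E3[unfolded q2 q3 q8] by linarith
        thus ?thesis unfolding eqL .
      qed
      thus ?thesis using K0 by (simp add: zero_le_mult_iff)
    qed
    have h6: "2*\<eta>' \<le> 4/1000*\<eta>' + 8004/1000*\<eta>'^2"
    proof (rule cancelK[OF K0])
      have eqL: "K*(2*\<eta>') = 2*(K*\<eta>')" by simp
      have eqR: "K*(4/1000*\<eta>' + 8004/1000*\<eta>'^2) = 4/1000*(K*\<eta>') + 8004/1000*(K*\<eta>'^2)" by (simp add: algebra_simps)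
      have "2*(K*\<eta>') \<le> 4/1000*(K*\<eta>') + 8004/1000*(K*\<eta>'^2)" using E4[unfolded q9 q10] by linarith
      thus "K*(2*\<eta>') \<le> K*(4/1000*\<eta>' + 8004/1000*\<eta>'^2)" unfolding eqL eqR .
    qed
    have ee: "\<eta>' = X - 2*\<tau> + 1" unfolding \<eta>'_def X_def \<tau>_def eta using rp by (simp add: field_simps)
    have ee0: "0 \<le> \<eta>'" unfolding \<eta>'_def using e0 rp by simp
    have "\<eta>' = 0" by (rule core_real[OF a0 ta0 Xa Y_def YX h1 h2 h3 h4 h5 h6 ee ee0])
    thus ?thesis unfolding \<eta>'_def using rp by simp
  qed
  thus ?thesis using rvecs_eq[OF u r] unfolding \<eta>_def h_def by simp
qed


lemma deriv1:
  fixes A B C D Y :: "nat \<Rightarrow> real"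
  shows "deriv (\<lambda>t. \<Sum>i<m. ((A i + t*B i)\<^sup>2 + (C i + t*D i)\<^sup>2 - Y i)\<^sup>2) 0
     = (\<Sum>i<m. 4*((A i)\<^sup>2 + (C i)\<^sup>2 - Y i)*(A i*B i + C i*D i))"
proof -
  have "((\<lambda>t. \<Sum>i<m. ((A i + t*B i)\<^sup>2 + (C i + t*D i)\<^sup>2 - Y i)\<^sup>2) has_field_derivative
     (\<Sum>i<m. 2*((A i + 0*B i)\<^sup>2 + (C i + 0*D i)\<^sup>2 - Y i)*(2*(A i + 0*B i)*(0 + 1*B i) + 2*(C i + 0*D i)*(0 + 1*D i)))) (at 0)"
    by (intro derivative_eq_intros DERIV_sum) (auto simp: power2_eq_square algebra_simps)
  hence "deriv (\<lambda>t. \<Sum>i<m. ((A i + t*B i)\<^sup>2 + (C i + t*D i)\<^sup>2 - Y i)\<^sup>2) 0 =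
     (\<Sum>i<m. 2*((A i + 0*B i)\<^sup>2 + (C i + 0*D i)\<^sup>2 - Y i)*(2*(A i + 0*B i)*(0 + 1*B i) + 2*(C i + 0*D i)*(0 + 1*D i)))"
    by (rule DERIV_imp_deriv)
  thus ?thesis by (simp add: algebra_simps)
qed

lemma deriv2:
  fixes A B C D Y P R :: "nat \<Rightarrow> real"
  shows "deriv (\<lambda>t. \<Sum>i<m. 4*((A i + t*B i)\<^sup>2 + (C i + t*D i)\<^sup>2 - Y i)*((A i + t*B i)*P i + (C i + t*D i)*R i)) 0
     = (\<Sum>i<m. 4*(2*(A i*B i + C i*D i)*(A i*P i + C i*R i) + ((A i)\<^sup>2 + (C i)\<^sup>2 - Y i)*(B i*P i + D i*R i)))"
proof -
  have "((\<lambda>t. \<Sum>i<m. 4*((A i + t*B i)\<^sup>2 + (C i + t*D i)\<^sup>2 - Y i)*((A i + t*B i)*P i + (C i + t*D i)*R i)) has_field_derivative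
     (\<Sum>i<m. 4*(2*(A i + 0*B i)*(0 + 1*B i) + 2*(C i + 0*D i)*(0 + 1*D i) - 0)*((A i + 0*B i)*P i + (C i + 0*D i)*R i)
          + 4*((A i + 0*B i)\<^sup>2 + (C i + 0*D i)\<^sup>2 - Y i)*((0 + 1*B i)*P i + (0 + 1*D i)*R i))) (at 0)"
    by (intro derivative_eq_intros DERIV_sum) (auto simp: power2_eq_square algebra_simps)
  hence "deriv (\<lambda>t. \<Sum>i<m. 4*((A i + t*B i)\<^sup>2 + (C i + t*D i)\<^sup>2 - Y i)*((A i + t*B i)*P i + (C i + t*D i)*R i)) 0 =
     (\<Sum>i<m. 4*(2*(A i + 0*B i)*(0 + 1*B i) + 2*(C i + 0*D i)*(0 + 1*D i) - 0)*((A i + 0*B i)*P i + (C i + 0*D i)*R i)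
          + 4*((A i + 0*B i)\<^sup>2 + (C i + 0*D i)\<^sup>2 - Y i)*((0 + 1*B i)*P i + (0 + 1*D i)*R i))"
    by (rule DERIV_imp_deriv)
  thus ?thesis by (simp add: algebra_simps)
qed

definition ev :: "nat \<Rightarrow> nat \<Rightarrow> real" where "ev j = (\<lambda>l. if l = j then 1 else 0)"

lemma ev_pert: "(\<lambda>l. u l + (if l = j then t else 0)) = (\<lambda>l. u l + t * ev j l)"
  by (auto simp: ev_def fun_eq_iff)

lemma dot_line: "dotp N g (\<lambda>l. v l + t * w l) = dotp N g v + t * dotp N g w"
  unfolding dotp_def by (simp add: sum.distrib sum_distrib_left algebra_simps)

lemma Mop_line: "Mop n (\<lambda>l. v l + t * w l) = (\<lambda>l. Mop n v l + t * Mop n w l)"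
  by (auto simp: Mop_def fun_eq_iff)

lemma Lf_line: "Lf n b (\<lambda>l. v l + t * w l) = Lf n b v + t * Lf n b w"
  unfolding Lf_def dot_line ..

lemma LfM_line: "Lf n b (Mop n (\<lambda>l. v l + t * w l)) = Lf n b (Mop n v) + t * Lf n b (Mop n w)"
  unfolding Mop_line Lf_line ..

lemma pr_line: "pr_obj n m a xn (\<lambda>l. v l + t * w l) =
  (\<Sum>i<m. ((Lf n (a i) v + t * Lf n (a i) w)\<^sup>2 + (Lf n (a i) (Mop n v) + t * Lf n (a i) (Mop n w))\<^sup>2 - Qf n (a i) (plus_vec n xn))\<^sup>2)"
  unfolding pr_obj_eq Qf_def[of n _ "(\<lambda>l. v l + t * w l)"] Lf_line LfM_line ..

lemma deriv_pr_line: "deriv (\<lambda>t. pr_obj n m a xn (\<lambda>l. v l + t * w l)) 0 =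
  (\<Sum>i<m. 4*(Qf n (a i) v - Qf n (a i) (plus_vec n xn)) * Bf n (a i) v w)"
  unfolding pr_line deriv1 Qf_def Bf_def ..

lemma pderiv_pr: "pderiv_r (pr_obj n m a xn) j v =
  (\<Sum>i<m. 4*(Qf n (a i) v - Qf n (a i) (plus_vec n xn)) * Bf n (a i) v (ev j))"
  unfolding pderiv_r_def ev_pert deriv_pr_line ..

lemma hess_pr: "hess_r (pr_obj n m a xn) u j k =
  (\<Sum>i<m. 4*(2*Bf n (a i) u (ev k) * Bf n (a i) u (ev j) + (Qf n (a i) u - Qf n (a i) (plus_vec n xn)) * Bf n (a i) (ev k) (ev j)))"
proof -
  have "hess_r (pr_obj n m a xn) u j k = deriv (\<lambda>t. \<Sum>i<m. 4*((Lf n (a i) u + t * Lf n (a i) (ev k))\<^sup>2 + (Lf n (a i) (Mop n u) + t * Lf n (a i) (Mop n (ev k)))\<^sup>2 - Qf n (a i) (plus_vec n xn))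
     * ((Lf n (a i) u + t * Lf n (a i) (ev k)) * Lf n (a i) (ev j) + (Lf n (a i) (Mop n u) + t * Lf n (a i) (Mop n (ev k))) * Lf n (a i) (Mop n (ev j)))) 0"
    unfolding hess_r_def ev_pert pderiv_pr Qf_def Bf_def Lf_line LfM_line ..
  also have "\<dots> = (\<Sum>i<m. 4*(2*Bf n (a i) u (ev k) * Bf n (a i) u (ev j) + (Qf n (a i) u - Qf n (a i) (plus_vec n xn)) * Bf n (a i) (ev k) (ev j)))"
    unfolding deriv2 Qf_def Bf_def by (simp add: algebra_simps)
  finally show ?thesis .
qed

lemma Lf_ev: "j < 2*n \<Longrightarrow> Lf n b (ev j) = plus_vec n b j"
  unfolding Lf_def dotp_def ev_def by (simp add: if_distrib cong: if_cong)

lemma LfM_ev: "j < 2*n \<Longrightarrow> Lf n b (Mop n (ev j)) = - Mop n (plus_vec n b) j"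
proof -
  assume j: "j < 2*n"
  have "Lf n b (Mop n (ev j)) = - dotp (2*n) (Mop n (plus_vec n b)) (ev j)"
    unfolding Lf_def by (rule dot_M_swap)
  also have "\<dots> = - Mop n (plus_vec n b) j" using j unfolding dotp_def ev_def by (simp add: if_distrib cong: if_cong)
  finally show ?thesis .
qed

lemma sum_Bf_ev: "(\<Sum>j<2*n. v j * Bf n b x (ev j)) = Bf n b x v"
proof -
  have "(\<Sum>j<2*n. v j * Bf n b x (ev j)) = (\<Sum>j<2*n. Lf n b x * (plus_vec n b j * v j) - Lf n b (Mop n x) * (Mop n (plus_vec n b) j * v j))"
    by (intro sum.cong refl) (simp add: Bf_def Lf_ev LfM_ev algebra_simps)
  also have "\<dots> = Lf n b x * dotp (2*n) (plus_vec n b) v - Lf n b (Mop n x) * dotp (2*n) (Mop n (plus_vec n b)) v"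
    unfolding dotp_def by (simp add: sum_subtractf sum_distrib_left)
  also have "\<dots> = Bf n b x v" unfolding Bf_def Lf_def dot_M_swap by simp
  finally show ?thesis .
qed

lemma sum_Bf_ev1: "(\<Sum>j<2*n. v j * Bf n b (ev j) x) = Bf n b v x"
  by (simp add: Bf_sym[of n b _ x] sum_Bf_ev)

lemma sum_swap3: "(\<Sum>j\<in>J. \<Sum>k\<in>K. \<Sum>i\<in>I. F i j k) = (\<Sum>i\<in>I. \<Sum>j\<in>J. \<Sum>k\<in>K. (F i j k::real))"
proof -
  have "(\<Sum>j\<in>J. \<Sum>k\<in>K. \<Sum>i\<in>I. F i j k) = (\<Sum>j\<in>J. \<Sum>i\<in>I. \<Sum>k\<in>K. F i j k)"
    by (intro sum.cong refl) (rule sum.swap)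
  also have "\<dots> = (\<Sum>i\<in>I. \<Sum>j\<in>J. \<Sum>k\<in>K. F i j k)" by (rule sum.swap)
  finally show ?thesis .
qed

lemma grad_sum: "(\<Sum>j<2*n. w j * pderiv_r (pr_obj n m a xn) j u) =
   (\<Sum>i<m. 4*(Qf n (a i) u - Qf n (a i) (plus_vec n xn)) * Bf n (a i) u w)"
proof -
  define Z where "Z i = 4*(Qf n (a i) u - Qf n (a i) (plus_vec n xn))" for i
  define B where "B i j = Bf n (a i) u (ev j)" for i j
  have "(\<Sum>j<2*n. w j * pderiv_r (pr_obj n m a xn) j u) = (\<Sum>j<2*n. \<Sum>i<m. Z i * (w j * B i j))"
    unfolding pderiv_pr Z_def[symmetric] B_def[symmetric] sum_distrib_left by (intro sum.cong refl) (simp add: ac_simps)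
  also have "\<dots> = (\<Sum>i<m. \<Sum>j<2*n. Z i * (w j * B i j))" by (rule sum.swap)
  also have "\<dots> = (\<Sum>i<m. Z i * (\<Sum>j<2*n. w j * B i j))" by (simp add: sum_distrib_left)
  finally show ?thesis unfolding B_def Z_def sum_Bf_ev by simp
qed

lemma hess_sum: "(\<Sum>j<2*n. \<Sum>k<2*n. v j * hess_r (pr_obj n m a xn) u j k * v k) =
   (\<Sum>i<m. 8*(Bf n (a i) u v)\<^sup>2 + 4*((Qf n (a i) u - Qf n (a i) (plus_vec n xn)) * Qf n (a i) v))"
proof -
  define Z where "Z i = (Qf n (a i) u - Qf n (a i) (plus_vec n xn))" for i
  define B where "B i j = Bf n (a i) u (ev j)" for i j
  define E where "E i k j = Bf n (a i) (ev k) (ev j)" for i k j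
  have "(\<Sum>j<2*n. \<Sum>k<2*n. v j * hess_r (pr_obj n m a xn) u j k * v k) =
     (\<Sum>j<2*n. \<Sum>k<2*n. \<Sum>i<m. 8*((v k * B i k) * (v j * B i j)) + 4*Z i * (v j * (v k * E i k j)))"
    unfolding hess_pr Z_def[symmetric] B_def[symmetric] E_def[symmetric] sum_distrib_left sum_distrib_right
    by (intro sum.cong refl) (simp add: algebra_simps)
  also have "\<dots> = (\<Sum>i<m. \<Sum>j<2*n. \<Sum>k<2*n. 8*((v k * B i k) * (v j * B i j)) + 4*Z i * (v j * (v k * E i k j)))"
    by (rule sum_swap3)
  also have "\<dots> = (\<Sum>i<m. 8*((\<Sum>k<2*n. v k * B i k) * (\<Sum>j<2*n. v j * B i j)) + 4*Z i * (\<Sum>j<2*n. v j * (\<Sum>k<2*n. v k * E i k j)))"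
  proof (intro sum.cong refl)
    fix i
    have "(\<Sum>j<2*n. \<Sum>k<2*n. 8*((v k * B i k) * (v j * B i j)) + 4*Z i * (v j * (v k * E i k j)))
        = (\<Sum>j<2*n. 8*((\<Sum>k<2*n. v k * B i k) * (v j * B i j)) + 4*Z i * (v j * (\<Sum>k<2*n. v k * E i k j)))"
      by (intro sum.cong refl) (simp add: sum.distrib sum_distrib_left sum_distrib_right)
    also have "\<dots> = 8*((\<Sum>k<2*n. v k * B i k) * (\<Sum>j<2*n. v j * B i j)) + 4*Z i * (\<Sum>j<2*n. v j * (\<Sum>k<2*n. v k * E i k j))"
      by (simp add: sum.distrib sum_distrib_left sum_distrib_right)
    finally show "(\<Sum>j<2*n. \<Sum>k<2*n. 8*((v k * B i k) * (v j * B i j)) + 4*Z i * (v j * (v k * E i k j)))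
        = 8*((\<Sum>k<2*n. v k * B i k) * (\<Sum>j<2*n. v j * B i j)) + 4*Z i * (\<Sum>j<2*n. v j * (\<Sum>k<2*n. v k * E i k j))" .
  qed
  also have "\<dots> = (\<Sum>i<m. 8*(Bf n (a i) u v)\<^sup>2 + 4*((Qf n (a i) u - Qf n (a i) (plus_vec n xn)) * Qf n (a i) v))"
    unfolding B_def E_def Z_def sum_Bf_ev sum_Bf_ev1 by (simp add: power2_eq_square Bf_self algebra_simps)
  finally show ?thesis .
qed


lemma poly_min:
  fixes P1 P2 P3 P4 \<eta> :: real
  assumes e: "\<eta> > 0" and H: "\<And>t. \<bar>t\<bar> < \<eta> \<Longrightarrow> t*P1 + t^2*P2 + t^3*P3 + t^4*P4 \<ge> 0"
  shows "P1 = 0" "P2 \<ge> 0"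
proof -
  let ?g = "\<lambda>t::real. P1 + t*P2 + t^2*P3 + t^3*P4"
  have gc: "(?g \<longlongrightarrow> P1) (at 0 within S)" for S by (rule tendsto_eq_intros refl tendsto_ident_at | simp)+
  have gpos: "?g t \<ge> 0" if "0 < t" "t < \<eta>" for t
  proof -
    have "t * ?g t \<ge> 0" using H[of t] that by (simp add: algebra_simps power2_eq_square power3_eq_cube power4_eq_xxxx)
    thus ?thesis using that by (simp add: zero_le_mult_iff)
  qed
  have gneg: "?g t \<le> 0" if "-\<eta> < t" "t < 0" for t
  proof -
    have "t * ?g t \<ge> 0" using H[of t] that by (simp add: algebra_simps power2_eq_square power3_eq_cube power4_eq_xxxx)
    thus ?thesis using that by (simp add: zero_le_mult_iff)
  qed
  have "P1 \<ge> 0"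
  proof (rule tendsto_lowerbound[OF gc])
    show "\<forall>\<^sub>F t in at_right 0. 0 \<le> ?g t"
      using eventually_at_right_real[OF e] by eventually_elim (auto intro: gpos)
  qed simp
  moreover have "P1 \<le> 0"
  proof (rule tendsto_upperbound[OF gc])
    show "\<forall>\<^sub>F t in at_left 0. ?g t \<le> 0"
    proof -
      have "eventually (\<lambda>x. x \<in> {-\<eta><..<0}) (at_left (0::real))" using e by (intro eventually_at_left_real) simp
      thus ?thesis by eventually_elim (auto intro: gneg)
    qed
  qed simp
  ultimately show P1: "P1 = 0" by simp
  let ?h = "\<lambda>t::real. P2 + t*P3 + t^2*P4"
  have hc: "(?h \<longlongrightarrow> P2) (at 0 within S)" for S by (rule tendsto_eq_intros refl tendsto_ident_at | simp)+
  have hpos: "?h t \<ge> 0" if "0 < t" "t < \<eta>" for t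
  proof -
    have "t^2 * ?h t \<ge> 0" using H[of t] that P1 by (simp add: algebra_simps power2_eq_square power3_eq_cube power4_eq_xxxx)
    thus ?thesis using that by (simp add: zero_le_mult_iff)
  qed
  show "P2 \<ge> 0"
  proof (rule tendsto_lowerbound[OF hc])
    show "\<forall>\<^sub>F t in at_right 0. 0 \<le> ?h t"
      using eventually_at_right_real[OF e] by eventually_elim (auto intro: hpos)
  qed simp
qed

lemma quartic_pt:
  fixes A B C D Y t :: real
  shows "((A + t*B)\<^sup>2 + (C + t*D)\<^sup>2 - Y)\<^sup>2 - (A\<^sup>2 + C\<^sup>2 - Y)\<^sup>2 =
    t * (2*(A\<^sup>2 + C\<^sup>2 - Y)*(2*(A*B + C*D))) + t^2 * ((2*(A*B + C*D))\<^sup>2 + 2*(A\<^sup>2 + C\<^sup>2 - Y)*(B\<^sup>2 + D\<^sup>2))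
    + t^3 * (2*(2*(A*B + C*D))*(B\<^sup>2 + D\<^sup>2)) + t^4 * (B\<^sup>2 + D\<^sup>2)\<^sup>2"
  by algebra

lemma sum4_poly: "(\<Sum>i\<in>I. t * x i + t^2 * y i + t^3 * z i + t^4 * w i) = t*(\<Sum>i\<in>I. x i) + t^2*(\<Sum>i\<in>I. y i) + t^3*(\<Sum>i\<in>I. z i) + t^4*(\<Sum>i\<in>I. (w i::real))"
  by (simp add: sum.distrib sum_distrib_left)

lemma localmin_conds:
  assumes lm: "is_local_min (2*n) (pr_obj n m a xn) u" and w: "w \<in> rvecs (2*n)"
  shows "(\<Sum>i<m. 4*(Qf n (a i) u - Qf n (a i) (plus_vec n xn)) * Bf n (a i) u w) = 0"
    "(\<Sum>i<m. 8*(Bf n (a i) u w)\<^sup>2 + 4*((Qf n (a i) u - Qf n (a i) (plus_vec n xn)) * Qf n (a i) w)) \<ge> 0"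
proof -
  from lm obtain \<epsilon> where u: "u \<in> rvecs (2*n)" and ep: "\<epsilon> > 0"
    and loc: "\<And>v. v \<in> rvecs (2*n) \<Longrightarrow> rnorm (2*n) (\<lambda>j. v j - u j) < \<epsilon> \<Longrightarrow> pr_obj n m a xn u \<le> pr_obj n m a xn v"
    unfolding is_local_min_def by blast
  define A where "A i = Lf n (a i) u" for i
  define B where "B i = Lf n (a i) w" for i
  define C where "C i = Lf n (a i) (Mop n u)" for i
  define D where "D i = Lf n (a i) (Mop n w)" for i
  define Y where "Y i = Qf n (a i) (plus_vec n xn)" for i
  define P1 where "P1 = (\<Sum>i<m. 2*((A i)\<^sup>2 + (C i)\<^sup>2 - Y i)*(2*(A i*B i + C i*D i)))"
  define P2 where "P2 = (\<Sum>i<m. (2*(A i*B i + C i*D i))\<^sup>2 + 2*((A i)\<^sup>2 + (C i)\<^sup>2 - Y i)*((B i)\<^sup>2 + (D i)\<^sup>2))"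
  define P3 where "P3 = (\<Sum>i<m. 2*(2*(A i*B i + C i*D i))*((B i)\<^sup>2 + (D i)\<^sup>2))"
  define P4 where "P4 = (\<Sum>i<m. ((B i)\<^sup>2 + (D i)\<^sup>2)\<^sup>2)"
  have Fu: "pr_obj n m a xn u = (\<Sum>i<m. ((A i)\<^sup>2 + (C i)\<^sup>2 - Y i)\<^sup>2)"
    unfolding pr_obj_eq A_def C_def Y_def Qf_def ..
  have Fline: "pr_obj n m a xn (\<lambda>l. u l + t * w l) - pr_obj n m a xn u = t*P1 + t^2*P2 + t^3*P3 + t^4*P4" for t
  proof -
    have "pr_obj n m a xn (\<lambda>l. u l + t * w l) - pr_obj n m a xn u =
        (\<Sum>i<m. ((A i + t*B i)\<^sup>2 + (C i + t*D i)\<^sup>2 - Y i)\<^sup>2 - ((A i)\<^sup>2 + (C i)\<^sup>2 - Y i)\<^sup>2)"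
      unfolding Fu pr_line A_def B_def C_def D_def Y_def by (simp add: sum_subtractf)
    also have "\<dots> = t*P1 + t^2*P2 + t^3*P3 + t^4*P4"
      unfolding quartic_pt sum4_poly P1_def P2_def P3_def P4_def ..
    finally show ?thesis .
  qed
  define \<eta> where "\<eta> = \<epsilon> / (rnorm (2*n) w + 1)"
  have wn: "rnorm (2*n) w \<ge> 0" by (rule rnorm_nonneg)
  have eta: "\<eta> > 0" unfolding \<eta>_def using ep wn by simp
  have H: "t*P1 + t^2*P2 + t^3*P3 + t^4*P4 \<ge> 0" if t: "\<bar>t\<bar> < \<eta>" for t
  proof -
    have vr: "(\<lambda>l. u l + t * w l) \<in> rvecs (2*n)" using u w unfolding rvecs_def by simp
    have "rnorm (2*n) (\<lambda>j. (u j + t * w j) - u j) = \<bar>t\<bar> * rnorm (2*n) w"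
      using rnorm_scale[of "2*n" t w] by simp
    also have "\<dots> \<le> \<bar>t\<bar> * (rnorm (2*n) w + 1)" by (intro mult_left_mono) auto
    also have "\<dots> < \<eta> * (rnorm (2*n) w + 1)" using t wn by (intro mult_strict_right_mono) auto
    also have "\<dots> = \<epsilon>" unfolding \<eta>_def using wn by simp
    finally have "pr_obj n m a xn u \<le> pr_obj n m a xn (\<lambda>l. u l + t * w l)" using loc[OF vr] by simp
    thus ?thesis using Fline[of t] by simp
  qed
  have p1: "P1 = 0" and p2: "P2 \<ge> 0" using poly_min[OF eta H] by auto
  show "(\<Sum>i<m. 4*(Qf n (a i) u - Qf n (a i) (plus_vec n xn)) * Bf n (a i) u w) = 0"
    using p1 unfolding P1_def A_def B_def C_def D_def Y_def Qf_def Bf_def by (simp add: algebra_simps)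
  have "(\<Sum>i<m. 8*(Bf n (a i) u w)\<^sup>2 + 4*((Qf n (a i) u - Qf n (a i) (plus_vec n xn)) * Qf n (a i) w)) = 2 * P2"
    unfolding P2_def A_def B_def C_def D_def Y_def Qf_def Bf_def sum_distrib_left
    by (intro sum.cong refl) (simp add: algebra_simps power2_eq_square)
  thus "(\<Sum>i<m. 8*(Bf n (a i) u w)\<^sup>2 + 4*((Qf n (a i) u - Qf n (a i) (plus_vec n xn)) * Qf n (a i) w)) \<ge> 0"
    using p2 by simp
qed


definition Kbox :: "nat \<Rightarrow> (nat \<Rightarrow> real) set" where
  "Kbox N = PiE UNIV (\<lambda>j. if j < N then {-1..1} else {0})"

lemma compact_Kbox: "compact (Kbox N)"
proof -
  have "compactin (product_topology (\<lambda>i. euclidean) UNIV) (Kbox N)"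
    unfolding Kbox_def compactin_PiE by auto
  thus ?thesis unfolding euclidean_product_topology by simp
qed

definition Sph :: "nat \<Rightarrow> (nat \<Rightarrow> real) set" where
  "Sph N = Kbox N \<inter> {x. (\<Sum>j<N. x j * x j) = 1}"

lemma compact_Sph: "compact (Sph N)"
  unfolding Sph_def
proof (rule compact_Int_closed[OF compact_Kbox])
  show "closed {x::nat\<Rightarrow>real. (\<Sum>j<N. x j * x j) = 1}"
    by (rule closed_Collect_eq) (auto intro!: continuous_intros continuous_on_product_coordinates)
qed

lemma Sph_mem: "x \<in> rvecs N \<Longrightarrow> dotp N x x = 1 \<Longrightarrow> x \<in> Sph N"
proof -
  assume x: "x \<in> rvecs N" and d: "dotp N x x = 1"
  have rn: "rnorm N x = 1" unfolding rnorm_dot d by simp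
  have "x \<in> Kbox N" unfolding Kbox_def PiE_def Pi_def extensional_def
    using x comp_le_rnorm[of _ N x] rn by (auto simp: rvecs_def abs_le_iff)
  thus ?thesis using d unfolding Sph_def dotp_def by simp
qed

lemma Sph_D: "x \<in> Sph N \<Longrightarrow> x \<in> rvecs N \<and> dotp N x x = 1"
proof -
  assume x: "x \<in> Sph N"
  hence k: "\<And>j. x j \<in> (if j < N then {-1..1} else {0})" and d: "(\<Sum>j<N. x j * x j) = 1"
    unfolding Sph_def Kbox_def by (auto simp: PiE_def Pi_def)
  have "x j = 0" if "N \<le> j" for j using k[of j] that by simp
  thus ?thesis using d unfolding rvecs_def dotp_def by auto
qed

definition qf :: "nat \<Rightarrow> (nat \<Rightarrow> nat \<Rightarrow> real) \<Rightarrow> (nat \<Rightarrow> real) \<Rightarrow> real" where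
  "qf N H x = (\<Sum>j<N. \<Sum>k<N. x j * H j k * x k)"

lemma qf_cont: "continuous_on S (qf N H)"
  unfolding qf_def by (auto intro!: continuous_intros continuous_on_subset[OF continuous_on_product_coordinates])

lemma if10: "(if a = j then 1 else 0) * y = (if a = j then y else (0::real))" by simp
lemma if10': "y * (if a = j then 1 else 0) = (if a = j then y else (0::real))" by simp

lemma ev_dot: "j < N \<Longrightarrow> (\<Sum>a<N. ev j a * (x a::real)) = x j"
  unfolding ev_def if10 by simp

lemma ev_jj: "ev j j = 1" unfolding ev_def by simp

lemma ev_sum1: "j < N \<Longrightarrow> (\<Sum>a<N. \<Sum>b<N. ev j a * H a b * x b) = (\<Sum>b<N. H j b * (x b::real))"
proof -
  assume j: "j < N"
  have "(\<Sum>a<N. \<Sum>b<N. ev j a * H a b * x b) = (\<Sum>a<N. ev j a * (\<Sum>b<N. H a b * x b))"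
    by (simp add: sum_distrib_left mult.assoc)
  thus ?thesis using ev_dot[OF j, of "\<lambda>a. \<Sum>b<N. H a b * x b"] by simp
qed

lemma ev_sum2: "j < N \<Longrightarrow> (\<Sum>a<N. \<Sum>b<N. x a * H a b * ev j b) = (\<Sum>a<N. x a * (H a j::real))"
proof -
  assume j: "j < N"
  have "(\<Sum>a<N. \<Sum>b<N. x a * H a b * ev j b) = (\<Sum>a<N. x a * (\<Sum>b<N. ev j b * H a b))"
    by (simp add: sum_distrib_left ac_simps)
  thus ?thesis using ev_dot[OF j, of "\<lambda>b. H _ b"] by simp
qed

lemma ev_sum3: "j < N \<Longrightarrow> (\<Sum>a<N. \<Sum>b<N. ev j a * H a b * ev j b) = (H j j::real)"
proof -
  assume j: "j < N"
  have "(\<Sum>a<N. \<Sum>b<N. ev j a * H a b * ev j b) = (\<Sum>a<N. ev j a * (\<Sum>b<N. ev j b * H a b))"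
    by (simp add: sum_distrib_left ac_simps)
  also have "\<dots> = (\<Sum>a<N. ev j a * H a j)" using ev_dot[OF j, of "\<lambda>b. H _ b"] by simp
  also have "\<dots> = H j j" using ev_dot[OF j, of "\<lambda>a. H a j"] .
  finally show ?thesis .
qed

lemma qf_line:
  assumes j: "j < N" and symH: "\<And>a b. a < N \<Longrightarrow> b < N \<Longrightarrow> H a b = H b a"
  shows "qf N H (\<lambda>l. x l + t * ev j l) = qf N H x + 2*t*(\<Sum>k<N. H j k * x k) + t^2 * H j j"
proof -
  have "qf N H (\<lambda>l. x l + t * ev j l) = (\<Sum>a<N. \<Sum>b<N. x a * H a b * x b + t * (ev j a * H a b * x b) + t * (x a * H a b * ev j b) + t^2 * (ev j a * H a b * ev j b))"
    unfolding qf_def by (intro sum.cong refl) (simp add: algebra_simps power2_eq_square)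
  also have "\<dots> = qf N H x + t * (\<Sum>a<N. \<Sum>b<N. ev j a * H a b * x b) + t * (\<Sum>a<N. \<Sum>b<N. x a * H a b * ev j b) + t^2 * (\<Sum>a<N. \<Sum>b<N. ev j a * H a b * ev j b)"
    unfolding qf_def by (simp add: sum.distrib sum_distrib_left)
  also have "\<dots> = qf N H x + t * (\<Sum>b<N. H j b * x b) + t * (\<Sum>a<N. x a * H a j) + t^2 * H j j"
    by (simp only: ev_sum3[OF j]) (simp only: ev_sum1[OF j] ev_sum2[OF j])
  also have "(\<Sum>a<N. x a * H a j) = (\<Sum>k<N. H j k * x k)" using symH j by (intro sum.cong refl) (simp add: mult.commute)
  finally show ?thesis by simp
qed

lemma dot_line_ev: "j < N \<Longrightarrow> dotp N (\<lambda>l. x l + t * ev j l) (\<lambda>l. x l + t * ev j l) = dotp N x x + 2*t*x j + t^2"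
proof -
  assume j: "j < N"
  have "dotp N (\<lambda>l. x l + t * ev j l) (\<lambda>l. x l + t * ev j l) = (\<Sum>a<N. x a * x a + 2*t*(ev j a * x a) + t^2 * (ev j a * ev j a))"
    unfolding dotp_def by (intro sum.cong refl) (simp add: algebra_simps power2_eq_square)
  also have "\<dots> = dotp N x x + 2*t*(\<Sum>a<N. ev j a * x a) + t^2 * (\<Sum>a<N. ev j a * ev j a)"
    unfolding dotp_def by (simp add: sum.distrib sum_distrib_left)
  also have "\<dots> = dotp N x x + 2*t*x j + t^2" using j by (simp add: ev_dot ev_jj)
  finally show ?thesis .
qed

lemma qf_scale: "qf N H (\<lambda>j. c * x j) = c^2 * qf N H x"
  unfolding qf_def by (simp add: sum_distrib_left power2_eq_square ac_simps)

lemma qf_zero: "dotp N x x = 0 \<Longrightarrow> qf N H x = 0"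
  unfolding qf_def by (auto intro!: sum.neutral dest: dot_self_zero)

lemma neg_eig:
  assumes symH: "\<And>a b. a < N \<Longrightarrow> b < N \<Longrightarrow> H a b = H b a"
    and v: "v \<in> rvecs N" and neg: "qf N H v < 0"
  shows "\<exists>\<mu><0. \<exists>w\<in>rvecs N. w \<noteq> (\<lambda>_. 0) \<and> (\<forall>j<N. (\<Sum>k<N. H j k * w k) = \<mu> * w j)"
proof -
  have vv: "dotp N v v > 0"
  proof -
    have "dotp N v v \<noteq> 0" using qf_zero neg by force
    thus ?thesis using dot_self_nonneg[of N v] by simp
  qed
  define v1 where "v1 = (\<lambda>j. (1 / sqrt (dotp N v v)) * v j)"
  have v1S: "v1 \<in> Sph N"
  proof (rule Sph_mem)
    show "v1 \<in> rvecs N" using v unfolding v1_def rvecs_def by simp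
    have "dotp N v1 v1 = (1 / sqrt (dotp N v v))^2 * dotp N v v"
      unfolding v1_def dotp_def by (simp add: sum_distrib_left power2_eq_square ac_simps sum_divide_distrib)
    thus "dotp N v1 v1 = 1" using vv by (simp add: power_divide)
  qed
  obtain x where xS: "x \<in> Sph N" and xmin: "\<And>y. y \<in> Sph N \<Longrightarrow> qf N H x \<le> qf N H y"
    using continuous_attains_inf[of "Sph N" "qf N H", OF compact_Sph _ qf_cont] v1S by blast
  define \<mu> where "\<mu> = qf N H x"
  have x: "x \<in> rvecs N" "dotp N x x = 1" using Sph_D[OF xS] by auto
  have mu: "\<mu> < 0"
  proof -
    have "qf N H v1 = (1 / sqrt (dotp N v v))^2 * qf N H v" unfolding v1_def qf_scale ..
    also have "\<dots> < 0" using neg vv by (simp add: mult_pos_neg)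
    finally show ?thesis unfolding \<mu>_def using xmin[OF v1S] by simp
  qed
  have ge: "qf N H y \<ge> \<mu> * dotp N y y" if y: "y \<in> rvecs N" for y
  proof (cases "dotp N y y = 0")
    case True thus ?thesis using qf_zero[OF True] by simp
  next
    case False
    hence yy: "dotp N y y > 0" using dot_self_nonneg[of N y] by simp
    define y1 where "y1 = (\<lambda>j. (1 / sqrt (dotp N y y)) * y j)"
    have "y1 \<in> Sph N"
    proof (rule Sph_mem)
      show "y1 \<in> rvecs N" using y unfolding y1_def rvecs_def by simp
      have "dotp N y1 y1 = (1 / sqrt (dotp N y y))^2 * dotp N y y"
        unfolding y1_def dotp_def by (simp add: sum_distrib_left power2_eq_square ac_simps sum_divide_distrib)
      thus "dotp N y1 y1 = 1" using yy by (simp add: power_divide)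
    qed
    hence "\<mu> \<le> qf N H y1" unfolding \<mu>_def by (rule xmin)
    also have "qf N H y1 = qf N H y / dotp N y y" unfolding y1_def qf_scale using yy by (simp add: power_divide)
    finally show ?thesis using yy by (simp add: pos_le_divide_eq)
  qed
  have eig: "(\<Sum>k<N. H j k * x k) = \<mu> * x j" if j: "j < N" for j
  proof -
    define P1 where "P1 = 2*((\<Sum>k<N. H j k * x k) - \<mu> * x j)"
    define P2 where "P2 = H j j - \<mu>"
    have "t*P1 + t^2*P2 + t^3*0 + t^4*0 \<ge> 0" if "\<bar>t\<bar> < 1" for t
    proof -
      have yr: "(\<lambda>l. x l + t * ev j l) \<in> rvecs N" using x(1) j unfolding rvecs_def ev_def by auto
      have "qf N H (\<lambda>l. x l + t * ev j l) \<ge> \<mu> * dotp N (\<lambda>l. x l + t * ev j l) (\<lambda>l. x l + t * ev j l)"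
        by (rule ge[OF yr])
      moreover have "qf N H (\<lambda>l. x l + t * ev j l) = \<mu> + 2*t*(\<Sum>k<N. H j k * x k) + t^2 * H j j"
        using qf_line[where x=x and t=t and H=H, OF j symH] unfolding \<mu>_def by simp
      moreover have "dotp N (\<lambda>l. x l + t * ev j l) (\<lambda>l. x l + t * ev j l) = 1 + 2*t*x j + t^2"
        unfolding dot_line_ev[OF j] x(2) ..
      ultimately have "\<mu> + 2*t*(\<Sum>k<N. H j k * x k) + t^2 * H j j \<ge> \<mu> * (1 + 2*t*x j + t^2)"
        by simp
      thus ?thesis unfolding P1_def P2_def by (simp add: algebra_simps)
    qed
    hence "P1 = 0" using poly_min(1)[of 1 P1 P2 0 0] by simp
    thus ?thesis unfolding P1_def by simp
  qed
  have "x \<noteq> (\<lambda>_. 0)" using x(2) unfolding dotp_def by auto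
  thus ?thesis using mu x(1) eig by blast
qed


lemma plus_vec_rvecs: "plus_vec n x \<in> rvecs (2*n)" unfolding plus_vec_def rvecs_def by simp

lemma plus_vec_rot: "plus_vec n (\<lambda>j. x j * w) = (\<lambda>j. Re w * plus_vec n x j + Im w * Mop n (plus_vec n x) j)"
  by (auto simp: plus_vec_def Mop_def fun_eq_iff algebra_simps)

lemma Qf_rot:
  assumes r: "r \<in> rvecs (2*n)" and cs: "c^2 + s^2 = 1"
  shows "Qf n b (\<lambda>j. c * r j + s * Mop n r j) = Qf n b r"
proof -
  have M: "Mop n (\<lambda>j. c * r j + s * Mop n r j) = (\<lambda>j. c * Mop n r j + (-s) * r j)"
    unfolding Mop_lin Mop_MM[OF r] by (simp add: fun_eq_iff)
  have "Qf n b (\<lambda>j. c * r j + s * Mop n r j) = (c * Lf n b r + s * Lf n b (Mop n r))\<^sup>2 + (c * Lf n b (Mop n r) - s * Lf n b r)\<^sup>2"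
    unfolding Qf_def M Lf_def dot_lin by simp
  also have "\<dots> = (c^2 + s^2) * Qf n b r" unfolding Qf_def by (simp add: power2_eq_square algebra_simps)
  finally show ?thesis using cs by simp
qed

lemma phase_align:
  assumes u: "u \<in> rvecs (2*n)"
  shows "\<exists>w. cmod w = 1 \<and> dotp (2*n) u (Mop n (plus_vec n (\<lambda>j. xn j * w))) = 0 \<and>
     dotp (2*n) u (plus_vec n (\<lambda>j. xn j * w)) \<ge> 0 \<and>
     (\<forall>b. Qf n b (plus_vec n (\<lambda>j. xn j * w)) = Qf n b (plus_vec n xn))"
proof -
  define r where "r = plus_vec n xn"
  have r: "r \<in> rvecs (2*n)" unfolding r_def by (rule plus_vec_rvecs)
  define t where "t = dotp (2*n) u r"
  define t' where "t' = dotp (2*n) u (Mop n r)"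
  define w where "w = (if t = 0 \<and> t' = 0 then 1 else Complex (t / sqrt (t^2 + t'^2)) (t' / sqrt (t^2 + t'^2)))"
  have cs: "(Re w)^2 + (Im w)^2 = 1"
  proof (cases "t = 0 \<and> t' = 0")
    case False
    hence "t^2 + t'^2 > 0" by (simp add: add_pos_pos sum_power2_gt_zero_iff)
    thus ?thesis unfolding w_def using False by (simp add: power_divide add_divide_distrib[symmetric])
  qed (simp add: w_def)
  have nw: "cmod w = 1" using cs unfolding cmod_def by simp
  have rot: "plus_vec n (\<lambda>j. xn j * w) = (\<lambda>j. Re w * r j + Im w * Mop n r j)"
    unfolding plus_vec_rot r_def ..
  have Mrot: "Mop n (\<lambda>j. Re w * r j + Im w * Mop n r j) = (\<lambda>j. Re w * Mop n r j + (- Im w) * r j)"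
    unfolding Mop_lin Mop_MM[OF r] by (simp add: fun_eq_iff)
  have d1: "dotp (2*n) u (plus_vec n (\<lambda>j. xn j * w)) = Re w * t + Im w * t'"
    unfolding rot dot_lin t_def t'_def ..
  have d2: "dotp (2*n) u (Mop n (plus_vec n (\<lambda>j. xn j * w))) = Re w * t' - Im w * t"
    unfolding rot Mrot dot_lin t_def t'_def by simp
  have g1: "Re w * t + Im w * t' \<ge> 0"
  proof (cases "t = 0 \<and> t' = 0")
    case False
    hence p: "t^2 + t'^2 > 0" by (simp add: add_pos_pos sum_power2_gt_zero_iff)
    have "Re w * t + Im w * t' = (t^2 + t'^2) / sqrt (t^2 + t'^2)"
      unfolding w_def using False by (simp add: add_divide_distrib power2_eq_square)
    thus ?thesis using p by simp
  qed (simp add: w_def)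
  have g2: "Re w * t' - Im w * t = 0"
  proof (cases "t = 0 \<and> t' = 0")
    case False
    thus ?thesis unfolding w_def by (simp add: algebra_simps)
  qed (simp add: w_def)
  have q: "\<forall>b. Qf n b (plus_vec n (\<lambda>j. xn j * w)) = Qf n b (plus_vec n xn)"
    unfolding rot using Qf_rot[OF r cs] r_def by simp
  show ?thesis using nw d1 d2 g1 g2 q by (intro exI[of _ w]) simp
qed


lemma sum4: "(\<Sum>i<m. 4 * X i) = 0 \<Longrightarrow> (\<Sum>i<m. (X i::real)) = 0"
  by (simp add: sum_distrib_left[symmetric])

lemma pr_obj_nonneg: "pr_obj n m a xn v \<ge> 0"
  unfolding pr_obj_def by (simp add: sum_nonneg)

lemma main_thm:
  assumes n1: "n \<ge> 1" and m1: "m \<ge> 1" and sg: "\<sigma> > 0"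
    and op: "tensor_opnorm (2*n) (\<lambda>i1 i2 i3 i4. T_tensor n m \<sigma> a i1 i2 i3 i4 - S_tensor i1 i2 i3 i4) \<le> 1/1000"
  shows "(\<forall>u. is_local_min (2*n) (pr_obj n m a xn) u \<longrightarrow>
          (\<exists>\<theta>. 0 \<le> \<theta> \<and> \<theta> < 2*pi \<and> u = plus_vec n (\<lambda>j. xn j * exp (\<i> * complex_of_real \<theta>)))
          \<and> is_global_min (2*n) (pr_obj n m a xn) u)
   \<and> (\<forall>u. is_critical (2*n) (pr_obj n m a xn) u \<and> \<not> is_local_min (2*n) (pr_obj n m a xn) u \<longrightarrow>
          hess_has_neg_eigenvalue (2*n) (pr_obj n m a xn) u)"
proof -
  have H: "Hyp n m a \<sigma> (1/1000)" by (rule Hyp_from_opnorm[OF op])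
  have c: "cT m \<sigma> > 0" unfolding cT_def using m1 sg by simp
  define r0 where "r0 = plus_vec n xn"
  define hf where "hf u v = (\<Sum>i<m. 8*(Bf n (a i) u v)\<^sup>2 + 4*((Qf n (a i) u - Qf n (a i) r0) * Qf n (a i) v))" for u v
  have key: "\<exists>w. cmod w = 1 \<and> (hf u (plus_vec n (\<lambda>j. xn j * w)) \<ge> 0 \<longrightarrow> u = plus_vec n (\<lambda>j. xn j * w))"
    if u: "u \<in> rvecs (2*n)" and g0: "\<And>w. w \<in> rvecs (2*n) \<Longrightarrow> (\<Sum>i<m. 4*(Qf n (a i) u - Qf n (a i) r0) * Bf n (a i) u w) = 0"
    for u
  proof -
    obtain w where nw: "cmod w = 1" and orth: "dotp (2*n) u (Mop n (plus_vec n (\<lambda>j. xn j * w))) = 0"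
      and t0: "dotp (2*n) u (plus_vec n (\<lambda>j. xn j * w)) \<ge> 0"
      and qe: "\<And>b. Qf n b (plus_vec n (\<lambda>j. xn j * w)) = Qf n b r0"
      using phase_align[OF u, where xn=xn] unfolding r0_def by blast
    define r where "r = plus_vec n (\<lambda>j. xn j * w)"
    have r: "r \<in> rvecs (2*n)" unfolding r_def by (rule plus_vec_rvecs)
    have qe': "\<And>i. Qf n (a i) r0 = Qf n (a i) r" using qe unfolding r_def by simp
    have G: "(\<Sum>i<m. (Qf n (a i) u - Qf n (a i) r) * Bf n (a i) u v) = 0" if v: "v \<in> rvecs (2*n)" for v
    proof -
      have "(\<Sum>i<m. 4 * ((Qf n (a i) u - Qf n (a i) r) * Bf n (a i) u v)) = 0"
        using g0[OF v] unfolding qe' by (simp only: mult.assoc)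
      thus ?thesis by (rule sum4)
    qed
    have hr: "(\<lambda>j. u j - r j) \<in> rvecs (2*n)" using u r unfolding rvecs_def by simp
    have "hf u r \<ge> 0 \<longrightarrow> u = r"
    proof
      assume "hf u r \<ge> 0"
      hence Hr: "(\<Sum>i<m. 8*(Bf n (a i) u r)\<^sup>2 + 4*((Qf n (a i) u - Qf n (a i) r) * Qf n (a i) r)) \<ge> 0"
        unfolding hf_def qe' .
      show "u = r"
        by (rule core_vec[OF H c u r G[OF u] G[OF r] G[OF hr] Hr orth[folded r_def] t0[folded r_def]])
    qed
    thus ?thesis using nw unfolding r_def by (intro exI[of _ w]) simp
  qed
  have Fz: "pr_obj n m a xn (plus_vec n (\<lambda>j. xn j * w)) = 0" if "\<And>b. Qf n b (plus_vec n (\<lambda>j. xn j * w)) = Qf n b r0" for w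
    unfolding pr_obj_eq r0_def[symmetric] using that by simp
  have qrot: "Qf n b (plus_vec n (\<lambda>j. xn j * w)) = Qf n b r0" if "cmod w = 1" for b w
  proof -
    have cs: "(Re w)^2 + (Im w)^2 = 1" using that unfolding cmod_def by simp
    show ?thesis unfolding plus_vec_rot r0_def using Qf_rot[OF plus_vec_rvecs cs] .
  qed
  have gmin: "is_global_min (2*n) (pr_obj n m a xn) (plus_vec n (\<lambda>j. xn j * w))" if "cmod w = 1" for w
    unfolding is_global_min_def using Fz[OF qrot[OF that]] pr_obj_nonneg plus_vec_rvecs by simp
  have lmin: "is_local_min (2*n) (pr_obj n m a xn) (plus_vec n (\<lambda>j. xn j * w))" if "cmod w = 1" for w
  proof -
    have "pr_obj n m a xn (plus_vec n (\<lambda>j. xn j * w)) \<le> pr_obj n m a xn v" for v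
      using Fz[OF qrot[OF that]] pr_obj_nonneg[of n m a xn v] by simp
    moreover have "(1::real) > 0" by simp
    ultimately show ?thesis unfolding is_local_min_def using plus_vec_rvecs by blast
  qed
  have part1: "(\<exists>\<theta>. 0 \<le> \<theta> \<and> \<theta> < 2*pi \<and> u = plus_vec n (\<lambda>j. xn j * exp (\<i> * complex_of_real \<theta>)))
          \<and> is_global_min (2*n) (pr_obj n m a xn) u" if lm: "is_local_min (2*n) (pr_obj n m a xn) u" for u
  proof -
    have u: "u \<in> rvecs (2*n)" using lm unfolding is_local_min_def by blast
    obtain w where nw: "cmod w = 1" and imp: "hf u (plus_vec n (\<lambda>j. xn j * w)) \<ge> 0 \<longrightarrow> u = plus_vec n (\<lambda>j. xn j * w)"
      using key[OF u localmin_conds(1)[OF lm, folded r0_def]] by blast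
    have "hf u (plus_vec n (\<lambda>j. xn j * w)) \<ge> 0"
      unfolding hf_def r0_def by (rule localmin_conds(2)[OF lm plus_vec_rvecs])
    hence ueq: "u = plus_vec n (\<lambda>j. xn j * w)" using imp by blast
    define \<theta> where "\<theta> = Arg2pi w"
    have "w = exp (\<i> * complex_of_real \<theta>)" using Arg2pi_eq[of w] nw unfolding \<theta>_def by simp
    hence "0 \<le> \<theta> \<and> \<theta> < 2*pi \<and> u = plus_vec n (\<lambda>j. xn j * exp (\<i> * complex_of_real \<theta>))"
      using ueq Arg2pi_ge_0[of w] Arg2pi_lt_2pi[of w] unfolding \<theta>_def by simp
    thus ?thesis using gmin[OF nw] ueq by auto
  qed
  have part2: "hess_has_neg_eigenvalue (2*n) (pr_obj n m a xn) u"
    if cr: "is_critical (2*n) (pr_obj n m a xn) u" and nlm: "\<not> is_local_min (2*n) (pr_obj n m a xn) u" for u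
  proof -
    have u: "u \<in> rvecs (2*n)" and pd: "\<And>j. j < 2*n \<Longrightarrow> pderiv_r (pr_obj n m a xn) j u = 0"
      using cr unfolding is_critical_def by auto
    have g0: "(\<Sum>i<m. 4*(Qf n (a i) u - Qf n (a i) r0) * Bf n (a i) u w) = 0" for w
    proof -
      have "(\<Sum>j<2*n. w j * pderiv_r (pr_obj n m a xn) j u) = 0" using pd by simp
      thus ?thesis unfolding grad_sum r0_def .
    qed
    obtain w where nw: "cmod w = 1" and imp: "hf u (plus_vec n (\<lambda>j. xn j * w)) \<ge> 0 \<longrightarrow> u = plus_vec n (\<lambda>j. xn j * w)"
      using key[OF u g0] by blast
    have neg: "hf u (plus_vec n (\<lambda>j. xn j * w)) < 0"
    proof (rule ccontr)
      assume "\<not> ?thesis"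
      hence "u = plus_vec n (\<lambda>j. xn j * w)" using imp by simp
      thus False using nlm lmin[OF nw] by simp
    qed
    define r where "r = plus_vec n (\<lambda>j. xn j * w)"
    have qneg: "qf (2*n) (hess_r (pr_obj n m a xn) u) r < 0"
      unfolding qf_def hess_sum using neg unfolding hf_def r0_def r_def .
    have symH: "hess_r (pr_obj n m a xn) u j k = hess_r (pr_obj n m a xn) u k j" for j k
      unfolding hess_pr by (intro sum.cong refl) (simp add: Bf_sym[of n _ "ev j" "ev k"] mult.commute)
    show ?thesis unfolding hess_has_neg_eigenvalue_def
      by (rule neg_eig[OF symH plus_vec_rvecs qneg[unfolded r_def]])
  qed
  show ?thesis using part1 part2 by blast
qed

theorem theorem1:
  shows "\<exists>\<delta>0>0. \<forall>(n::nat) (m::nat) (a::nat \<Rightarrow> nat \<Rightarrow> complex) (xn::nat \<Rightarrow> complex) (\<sigma>::real).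
     n \<ge> 1 \<longrightarrow> m \<ge> 1 \<longrightarrow> \<sigma> > 0 \<longrightarrow>
     tensor_opnorm (2*n) (\<lambda>i1 i2 i3 i4. T_tensor n m \<sigma> a i1 i2 i3 i4 - S_tensor i1 i2 i3 i4) \<le> \<delta>0 \<longrightarrow>
     (\<forall>u. is_local_min (2*n) (pr_obj n m a xn) u \<longrightarrow>
          (\<exists>\<theta>. 0 \<le> \<theta> \<and> \<theta> < 2*pi \<and> u = plus_vec n (\<lambda>j. xn j * exp (\<i> * complex_of_real \<theta>)))
          \<and> is_global_min (2*n) (pr_obj n m a xn) u)
   \<and> (\<forall>u. is_critical (2*n) (pr_obj n m a xn) u \<and> \<not> is_local_min (2*n) (pr_obj n m a xn) u \<longrightarrow>
          hess_has_neg_eigenvalue (2*n) (pr_obj n m a xn) u)"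
proof (rule exI[of _ "1/1000"], rule conjI)
  show "(1/1000::real) > 0" by simp
next
  show "\<forall>(n::nat) (m::nat) (a::nat \<Rightarrow> nat \<Rightarrow> complex) (xn::nat \<Rightarrow> complex) (\<sigma>::real).
     n \<ge> 1 \<longrightarrow> m \<ge> 1 \<longrightarrow> \<sigma> > 0 \<longrightarrow>
     tensor_opnorm (2*n) (\<lambda>i1 i2 i3 i4. T_tensor n m \<sigma> a i1 i2 i3 i4 - S_tensor i1 i2 i3 i4) \<le> 1/1000 \<longrightarrow>
     (\<forall>u. is_local_min (2*n) (pr_obj n m a xn) u \<longrightarrow>
          (\<exists>\<theta>. 0 \<le> \<theta> \<and> \<theta> < 2*pi \<and> u = plus_vec n (\<lambda>j. xn j * exp (\<i> * complex_of_real \<theta>)))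
          \<and> is_global_min (2*n) (pr_obj n m a xn) u)
   \<and> (\<forall>u. is_critical (2*n) (pr_obj n m a xn) u \<and> \<not> is_local_min (2*n) (pr_obj n m a xn) u \<longrightarrow>
          hess_has_neg_eigenvalue (2*n) (pr_obj n m a xn) u)"
    by (intro allI impI) (rule main_thm)
qed


end
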